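(* Assume $x(0)=x'(0)=0$. Then $x(t)\to0$ as $t\to\infty$ if and only if all three of the following hold: (1) $y_2(t)\to0$ as $t\to\infty$; (2) $\int_0^t\cos(\omega s)A(s)y_2(s)\,ds=o(A(t))$ as $t\to\infty$; (3) $\int_0^t\sin(\omega s)A(s)y_2(s)\,ds=o(A(t))$ as $t\to\infty$.
   Context: Standing assumptions: $\omega>0$ is a constant; $p\in C^1([0,\infty))$ with $p(t)>0$ and $p'(t)<0$ for all $t\ge0$, $\int_0^\infty p(t)\,dt=\infty$ and $\int_0^\infty p(t)^2\,dt<\infty$; $f\in L^1_{\mathrm{loc}}([0,\infty))$. $x$ denotes the solution of $x''(t)+p(t)x'(t)+\omega^2x(t)=f(t)$, $t\ge0$. Notation: $A(t)=\exp(\frac12\int_0^tp(s)\,ds)$ (so $A(t)\to\infty$); $y_1(t)=\int_0^te^{-\omega^2(t-s)}f(s)\,ds$; $y_2(t)=\int_0^te^{-\omega^2(t-s)}y_1(s)\,ds=\int_0^t(t-s)e^{-\omega^2(t-s)}f(s)\,ds$. *)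

theory Defs
  imports "HOL-Analysis.Analysis" "HOL-Library.Landau_Symbols"
begin

definition Afun :: "(real \<Rightarrow> real) \<Rightarrow> real \<Rightarrow> real" where
  "Afun p t = exp ((1/2) * integral {0..t} p)"

definition y1fun :: "real \<Rightarrow> (real \<Rightarrow> real) \<Rightarrow> real \<Rightarrow> real" where
  "y1fun \<omega> f t = set_lebesgue_integral lborel {0..t} (\<lambda>s. exp (-(\<omega>^2) * (t - s)) * f s)"

definition y2fun :: "real \<Rightarrow> (real \<Rightarrow> real) \<Rightarrow> real \<Rightarrow> real" where
  "y2fun \<omega> f t = set_lebesgue_integral lborel {0..t} (\<lambda>s. exp (-(\<omega>^2) * (t - s)) * y1fun \<omega> f s)"

end

theory Submission
  imports Defs "HOL-Real_Asymp.Real_Asymp"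
begin


lemma inner_exp_int:
  fixes w s t :: real
  assumes "s \<le> t"
  shows "integral\<^sup>L lborel (\<lambda>r. indicator {s..t} r * (w * exp (w * r))) = exp (w * t) - exp (w * s)"
proof -
  have "integral\<^sup>L lborel (\<lambda>r. indicator {s..t} r *\<^sub>R (w * exp (w * r))) = exp (w * t) - exp (w * s)"
    by (rule integral_FTC_atLeastAtMost[OF assms])
       (auto intro!: derivative_eq_intros continuous_intros simp: has_real_derivative_iff_has_vector_derivative[symmetric])
  then show ?thesis by simp
qed

lemma ibp_exp_fubini:
  fixes f :: "real \<Rightarrow> real" and w t :: real
  assumes fi: "set_integrable lborel {0..t} f" and t0: "0 \<le> t" and w0: "0 < w"
  shows "(LINT s:{0..t}|lborel. exp (w * s) * f s) =
     exp (w * t) * (LINT s:{0..t}|lborel. f s)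
     - (LINT r:{0..t}|lborel. w * exp (w * r) * (LINT s:{0..r}|lborel. f s))"
proof -
  define g where "g s = indicator {0..t} s * f s" for s
  have gi: "integrable lborel g" using fi unfolding set_integrable_def g_def by simp
  have gm[measurable]: "g \<in> borel_measurable lborel" using gi by auto
  define h where "h = (\<lambda>(s,r). g s * (indicator {s..t} r * (w * exp (w * r))))"
  have ind: "indicator {s..t} r = (if s \<le> r \<and> r \<le> t then 1 else (0::real))" for s r :: real
    by (auto simp: indicator_def)
  have hm: "h \<in> borel_measurable (lborel \<Otimes>\<^sub>M lborel)"
    unfolding h_def ind by measurable
  have inner_r: "integral\<^sup>L lborel (\<lambda>r. h (s,r)) = g s * (exp (w * t) - exp (w * s))" for s
  proof (cases "s \<le> t")
    case True
    then show ?thesis unfolding h_def by (simp add: inner_exp_int)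
  next
    case False
    then have "g s = 0" by (simp add: g_def)
    then show ?thesis unfolding h_def by simp
  qed
  have bnd_int: "integrable lborel (\<lambda>s. g s * (exp (w * t) - exp (w * s)))"
  proof (rule Bochner_Integration.integrable_bound[where f="\<lambda>s. g s * exp (w * t)"])
    show "integrable lborel (\<lambda>s. g s * exp (w * t))" using gi by simp
    show "(\<lambda>s. g s * (exp (w * t) - exp (w * s))) \<in> borel_measurable lborel" by measurable
    show "AE x in lborel. norm (g x * (exp (w * t) - exp (w * x))) \<le> norm (g x * exp (w * t))"
    proof (rule AE_I2)
      fix s
      show "norm (g s * (exp (w * t) - exp (w * s))) \<le> norm (g s * exp (w * t))"
      proof (cases "s \<in> {0..t}")
        case True
        then have "exp (w * s) \<le> exp (w * t)" using w0 by (simp add: mult_left_mono)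
        then have "\<bar>exp (w * t) - exp (w * s)\<bar> \<le> \<bar>exp (w * t)\<bar>" by simp
        then show ?thesis by (simp add: abs_mult mult_left_mono)
      next
        case False
        then show ?thesis by (simp add: g_def)
      qed
    qed
  qed
  have hi: "integrable (lborel \<Otimes>\<^sub>M lborel) h"
  proof (rule lborel_pair.Fubini_integrable[OF hm])
    have "integral\<^sup>L lborel (\<lambda>r. norm (h (s, r))) = \<bar>g s * (exp (w * t) - exp (w * s))\<bar>" for s
    proof -
      have "(\<lambda>r. norm (h (s, r))) = (\<lambda>r. \<bar>g s\<bar> * (indicator {s..t} r * (w * exp (w * r))))"
        using w0 by (auto simp: h_def abs_mult fun_eq_iff indicator_def)
      then have "integral\<^sup>L lborel (\<lambda>r. norm (h (s, r))) = \<bar>g s\<bar> * (if s \<le> t then exp (w * t) - exp (w * s) else 0)"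
        by (simp add: inner_exp_int)
      also have "\<dots> = \<bar>g s * (exp (w * t) - exp (w * s))\<bar>"
        using w0 by (auto simp: g_def abs_mult)
      finally show ?thesis .
    qed
    then show "integrable lborel (\<lambda>s. integral\<^sup>L lborel (\<lambda>r. norm (h (s, r))))"
      using bnd_int by simp
    show "AE s in lborel. integrable lborel (\<lambda>r. h (s, r))"
    proof (rule AE_I2)
      fix s
      have "set_integrable lborel {s..t} (\<lambda>r. w * exp (w * r))"
        by (intro borel_integrable_atLeastAtMost' continuous_intros)
      then have "integrable lborel (\<lambda>r. g s * (indicator {s..t} r * (w * exp (w * r))))"
        unfolding set_integrable_def by simp
      then show "integrable lborel (\<lambda>r. h (s, r))" by (simp add: h_def)
    qed
  qed
  have fub: "integral\<^sup>L lborel (\<lambda>r. integral\<^sup>L lborel (\<lambda>s. h (s, r))) = integral\<^sup>L lborel (\<lambda>s. integral\<^sup>L lborel (\<lambda>r. h (s, r)))"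
    using lborel_pair.Fubini_integral[of "\<lambda>s r. h (s, r)"] hi by simp
  have inner_s: "integral\<^sup>L lborel (\<lambda>s. h (s, r)) = indicator {0..t} r * (w * exp (w * r) * (LINT s:{0..r}|lborel. f s))" for r
  proof -
    have "(\<lambda>s. h (s, r)) = (\<lambda>s. (indicator {0..t} r * (w * exp (w * r))) * (indicator {0..r} s * f s))"
      by (auto simp: h_def g_def fun_eq_iff indicator_def)
    then show ?thesis by (simp add: set_lebesgue_integral_def)
  qed
  have "integral\<^sup>L lborel (\<lambda>s. integral\<^sup>L lborel (\<lambda>r. h (s, r))) = 
        exp (w * t) * integral\<^sup>L lborel g - integral\<^sup>L lborel (\<lambda>s. g s * exp (w * s))"
  proof -
    have i2: "integrable lborel (\<lambda>s. g s * exp (w * s))"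
    proof -
      have "integrable lborel (\<lambda>s. g s * exp (w * t) - g s * (exp (w * t) - exp (w * s)))"
        using gi bnd_int by simp
      then show ?thesis by (simp add: algebra_simps)
    qed
    have "integral\<^sup>L lborel (\<lambda>s. integral\<^sup>L lborel (\<lambda>r. h (s, r))) =
        integral\<^sup>L lborel (\<lambda>s. g s * exp (w * t) - g s * exp (w * s))"
      by (simp add: inner_r algebra_simps)
    also have "\<dots> = exp (w * t) * integral\<^sup>L lborel g - integral\<^sup>L lborel (\<lambda>s. g s * exp (w * s))"
      using gi i2 by (simp add: mult.commute)
    finally show ?thesis .
  qed
  moreover have "integral\<^sup>L lborel (\<lambda>r. integral\<^sup>L lborel (\<lambda>s. h (s, r))) =
     (LINT r:{0..t}|lborel. w * exp (w * r) * (LINT s:{0..r}|lborel. f s))"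
    by (simp add: inner_s set_lebesgue_integral_def)
  moreover have "integral\<^sup>L lborel g = (LINT s:{0..t}|lborel. f s)"
    unfolding set_lebesgue_integral_def by (rule Bochner_Integration.integral_cong) (auto simp: g_def)
  moreover have "integral\<^sup>L lborel (\<lambda>s. g s * exp (w * s)) = (LINT s:{0..t}|lborel. exp (w * s) * f s)"
    unfolding g_def set_lebesgue_integral_def by (rule Bochner_Integration.integral_cong) auto
  ultimately show ?thesis
    using fub by (smt (verit))
qed


locale setting =
  fixes \<omega> :: real and p p' f x x' :: "real \<Rightarrow> real"
  assumes \<omega>_pos: "\<omega> > 0"
    and p_deriv: "\<And>t. t \<ge> 0 \<Longrightarrow> (p has_real_derivative p' t) (at t within {0..})"
    and p'_cont: "continuous_on {0..} p'"
    and p_pos: "\<And>t. t \<ge> 0 \<Longrightarrow> p t > 0"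
    and p'_neg: "\<And>t. t \<ge> 0 \<Longrightarrow> p' t < 0"
    and p_int_div: "filterlim (\<lambda>t. integral {0..t} p) at_top at_top"
    and p_sq_int: "set_integrable lborel {0..} (\<lambda>t. (p t)^2)"
    and f_loc: "\<And>t. t \<ge> 0 \<Longrightarrow> set_integrable lborel {0..t} f"
    and x_deriv: "\<And>t. t \<ge> 0 \<Longrightarrow> (x has_real_derivative x' t) (at t within {0..})"
    and x'_cont: "continuous_on {0..} x'"
    and x_ode: "\<And>t. t \<ge> 0 \<Longrightarrow>
        x' t = x' 0 + set_lebesgue_integral lborel {0..t}
                 (\<lambda>s. f s - p s * x' s - \<omega>^2 * x s)"
    and x0: "x 0 = 0" and x'0: "x' 0 = 0"
begin

abbreviation "w \<equiv> \<omega>^2"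

lemma w_pos: "w > 0" using \<omega>_pos by simp

lemma p_cont: "continuous_on {0..} p"
  using p_deriv by (auto simp: continuous_on_eq_continuous_within intro: DERIV_continuous)

lemma x_cont: "continuous_on {0..} x"
  using x_deriv by (auto simp: continuous_on_eq_continuous_within intro: DERIV_continuous)

lemma cont_sub: "continuous_on {0..} g \<Longrightarrow> continuous_on {a..b} g" if "0 \<le> a" for g :: "real \<Rightarrow> real"
  using that by (rule_tac continuous_on_subset) auto

lemma p_deriv_sub: "0 \<le> a \<Longrightarrow> t \<in> {a..b} \<Longrightarrow> (p has_real_derivative p' t) (at t within {a..b})"
  by (rule DERIV_subset[OF p_deriv]) auto

lemma x_deriv_sub: "0 \<le> a \<Longrightarrow> t \<in> {a..b} \<Longrightarrow> (x has_real_derivative x' t) (at t within {a..b})"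
  by (rule DERIV_subset[OF x_deriv]) auto

lemma p'_int: "0 \<le> a \<Longrightarrow> a \<le> b \<Longrightarrow> (p' has_integral (p b - p a)) {a..b}"
  by (rule fundamental_theorem_of_calculus) (auto intro!: p_deriv_sub simp: has_real_derivative_iff_has_vector_derivative[symmetric])

lemma p_dec: "0 \<le> a \<Longrightarrow> a \<le> b \<Longrightarrow> p b \<le> p a"
proof -
  assume "0 \<le> a" "a \<le> b"
  have "p b - p a \<le> 0"
    using has_integral_nonneg[OF has_integral_neg[OF p'_int[OF \<open>0 \<le> a\<close> \<open>a \<le> b\<close>]]] p'_neg \<open>0 \<le> a\<close>
    by (metis (no_types, lifting) atLeastAtMost_iff dual_order.trans neg_0_le_iff_le order_less_imp_le)
  then show ?thesis by simp
qed

definition p0 where "p0 = p 0"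

lemma p_le_p0: "t \<ge> 0 \<Longrightarrow> p t \<le> p0"
  unfolding p0_def using p_dec[of 0 t] by simp

lemma p0_pos: "p0 > 0" unfolding p0_def using p_pos by simp

definition P where "P t = integral {0..t} p"

lemma p_integrable: "0 \<le> a \<Longrightarrow> p integrable_on {a..b}"
  by (intro integrable_continuous_interval cont_sub p_cont)

lemma P_deriv: "0 \<le> t \<Longrightarrow> t \<le> T \<Longrightarrow> (P has_real_derivative p t) (at t within {0..T})"
  unfolding P_def by (rule integral_has_real_derivative) (auto intro: cont_sub p_cont)

lemma P_diff: "0 \<le> a \<Longrightarrow> a \<le> b \<Longrightarrow> P b - P a = integral {a..b} p"
  unfolding P_def using Henstock_Kurzweil_Integration.integral_combine[where a=0 and c=a and b=b and f=p] p_integrable[of 0 b] by simp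

lemma P_mono_bound: "0 \<le> a \<Longrightarrow> a \<le> b \<Longrightarrow> 0 \<le> P b - P a \<and> P b - P a \<le> p0 * (b - a)"
proof -
  assume ab: "0 \<le> a" "a \<le> b"
  have "integral {a..b} p \<le> integral {a..b} (\<lambda>_. p0)"
    by (rule integral_le) (use ab p_le_p0 p_integrable in auto)
  moreover have "0 \<le> integral {a..b} p"
    by (rule integral_nonneg) (use ab p_pos p_integrable in \<open>auto intro: less_imp_le\<close>)
  ultimately show ?thesis using P_diff[OF ab] ab by (simp add: algebra_simps)
qed

definition A where "A = Afun p"

lemma A_def': "A t = exp (P t / 2)" unfolding A_def Afun_def P_def by simp

lemma A_pos: "A t > 0" unfolding A_def' by simp

lemma A_ge1: "t \<ge> 0 \<Longrightarrow> A t \<ge> 1"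
  using P_mono_bound[of 0 t] unfolding A_def' by (simp add: P_def)

lemma A_mono: "0 \<le> a \<Longrightarrow> a \<le> b \<Longrightarrow> A a \<le> A b"
  using P_mono_bound[of a b] unfolding A_def' by simp

lemma A_shift: "0 \<le> a \<Longrightarrow> a \<le> b \<Longrightarrow> A b \<le> exp (p0 * (b - a) / 2) * A a"
proof -
  assume ab: "0 \<le> a" "a \<le> b"
  have "A b = exp ((P b - P a)/2) * A a" unfolding A_def' by (simp add: exp_add[symmetric] field_simps)
  also have "\<dots> \<le> exp (p0 * (b - a) / 2) * A a"
    using P_mono_bound[OF ab] by (intro mult_right_mono) (auto simp: less_imp_le[OF A_pos])
  finally show ?thesis .
qed

lemma A_deriv: "0 \<le> t \<Longrightarrow> t \<le> T \<Longrightarrow> (A has_real_derivative (p t * A t / 2)) (at t within {0..T})"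
  unfolding A_def'[abs_def] by (rule derivative_eq_intros P_deriv refl | simp)+

lemma A_lim: "filterlim A at_top at_top"
proof -
  have "filterlim (\<lambda>t. P t / 2) at_top at_top"
  proof -
    have "filterlim (\<lambda>t. (1/2) * P t) at_top at_top"
      using p_int_div unfolding P_def by (intro filterlim_tendsto_pos_mult_at_top[where c="1/2"]) auto
    then show ?thesis by simp
  qed
  then show ?thesis unfolding A_def'[abs_def] by (rule filterlim_compose[OF exp_at_top])
qed

end


lemma at_within_0T: "0 \<le> t \<Longrightarrow> t < T \<Longrightarrow> at t within {0..T} = at t within {(0::real)..}"
  by (rule at_within_nhd[of _ "{..<T}"]) auto

lemma cont_on_0: "(\<And>T. T \<ge> 0 \<Longrightarrow> continuous_on {0..T} g) \<Longrightarrow> continuous_on {(0::real)..} g"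
proof -
  assume H: "\<And>T. T \<ge> 0 \<Longrightarrow> continuous_on {0..T} g"
  show ?thesis unfolding continuous_on_eq_continuous_within
  proof
    fix t :: real assume "t \<in> {0..}"
    then have "continuous (at t within {0..t+1}) g" using H[of "t+1"]
      by (auto simp: continuous_on_eq_continuous_within)
    then show "continuous (at t within {0..}) g" using at_within_0T[of t "t+1"] \<open>t \<in> {0..}\<close> by simp
  qed
qed

context setting
begin

lemma cont_int: "continuous_on {0..} g \<Longrightarrow> 0 \<le> a \<Longrightarrow> g integrable_on {a..b}" for g :: "real \<Rightarrow> real"
  by (intro integrable_continuous_interval cont_sub)

lemma cont_setint: "continuous_on {0..} g \<Longrightarrow> 0 \<le> a \<Longrightarrow> set_integrable lborel {a..b} g" for g :: "real \<Rightarrow> real"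
  by (intro borel_integrable_atLeastAtMost' cont_sub)

lemma cont_LINT: "continuous_on {0..} g \<Longrightarrow> 0 \<le> a \<Longrightarrow> (LINT s:{a..b}|lborel. g s) = integral {a..b} g" for g :: "real \<Rightarrow> real"
  by (intro set_borel_integral_eq_integral cont_setint)

lemma int_deriv: "continuous_on {0..} g \<Longrightarrow> 0 \<le> s \<Longrightarrow> s \<le> T \<Longrightarrow>
   ((\<lambda>t. integral {0..t} g) has_real_derivative g s) (at s within {0..T})" for g :: "real \<Rightarrow> real"
  by (rule integral_has_real_derivative) (auto intro: cont_sub)

lemma int_cont: "continuous_on {0..} g \<Longrightarrow> continuous_on {0..} (\<lambda>t. integral {0..t} g)" for g :: "real \<Rightarrow> real"
  by (intro cont_on_0 indefinite_integral_continuous_1 cont_int) (auto intro: cont_sub)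

lemma x'_cont': "continuous_on {0..} x'" by (rule x'_cont)

definition g0 where "g0 s = p s * x' s + w * x s"

lemma g0_cont: "continuous_on {0..} g0"
  unfolding g0_def[abs_def] by (intro continuous_intros p_cont x_cont x'_cont)

definition J where "J t = integral {0..t} g0"
definition F where "F t = x' t + J t"
definition N where "N t = exp (-(w * t)) * integral {0..t} (\<lambda>s. exp (w * s) * F s)"
definition Y1 where "Y1 t = F t - w * N t"
definition Y2 where "Y2 t = exp (-(w * t)) * integral {0..t} (\<lambda>s. exp (w * s) * Y1 s)"

lemma J_cont: "continuous_on {0..} J"
  unfolding J_def[abs_def] by (rule int_cont[OF g0_cont])
lemma F_cont: "continuous_on {0..} F"
  unfolding F_def[abs_def] by (intro continuous_intros x'_cont J_cont)
lemma N_cont: "continuous_on {0..} N"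
  unfolding N_def[abs_def] by (intro continuous_intros int_cont F_cont)
lemma Y1_cont: "continuous_on {0..} Y1"
  unfolding Y1_def[abs_def] by (intro continuous_intros N_cont F_cont)
lemma Y2_cont: "continuous_on {0..} Y2"
  unfolding Y2_def[abs_def] by (intro continuous_intros int_cont Y1_cont)

lemma J_deriv: "0 \<le> s \<Longrightarrow> s \<le> T \<Longrightarrow> (J has_real_derivative g0 s) (at s within {0..T})"
  unfolding J_def[abs_def] by (rule int_deriv[OF g0_cont])

lemma N_deriv: "0 \<le> s \<Longrightarrow> s \<le> T \<Longrightarrow> (N has_real_derivative (F s - w * N s)) (at s within {0..T})"
proof -
  assume s: "0 \<le> s" "s \<le> T"
  have c: "continuous_on {0..} (\<lambda>s. exp (w * s) * F s)" by (intro continuous_intros F_cont)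
  show ?thesis unfolding N_def[abs_def]
    by (rule derivative_eq_intros int_deriv[OF c s] refl | simp)+
       (simp add: algebra_simps exp_minus field_simps)
qed

lemma Y2_deriv: "0 \<le> s \<Longrightarrow> s \<le> T \<Longrightarrow> (Y2 has_real_derivative (Y1 s - w * Y2 s)) (at s within {0..T})"
proof -
  assume s: "0 \<le> s" "s \<le> T"
  have c: "continuous_on {0..} (\<lambda>s. exp (w * s) * Y1 s)" by (intro continuous_intros Y1_cont)
  show ?thesis unfolding Y2_def[abs_def]
    by (rule derivative_eq_intros int_deriv[OF c s] refl | simp)+
       (simp add: algebra_simps exp_minus field_simps)
qed

end


context setting
begin

lemma LF_eq: "0 \<le> r \<Longrightarrow> (LINT s:{0..r}|lborel. f s) = F r"
proof -
  assume r: "0 \<le> r"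
  have i1: "set_integrable lborel {0..r} f" using f_loc r by simp
  have i2: "set_integrable lborel {0..r} g0" by (rule cont_setint[OF g0_cont]) simp
  have "(\<lambda>s. f s - p s * x' s - \<omega>^2 * x s) = (\<lambda>s. f s - g0 s)" by (auto simp: g0_def)
  then have "x' r = (LINT s:{0..r}|lborel. f s) - (LINT s:{0..r}|lborel. g0 s)"
    using x_ode[OF r] x'0 set_integral_diff(2)[OF i1 i2] by simp
  moreover have "(LINT s:{0..r}|lborel. g0 s) = J r" unfolding J_def by (rule cont_LINT[OF g0_cont]) simp
  ultimately show ?thesis by (simp add: F_def)
qed

lemma y1_eq: "0 \<le> t \<Longrightarrow> y1fun \<omega> f t = Y1 t"
proof -
  assume t: "0 \<le> t"
  have "y1fun \<omega> f t = (LINT s:{0..t}|lborel. exp (-(w * t)) * (exp (w * s) * f s))"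
    unfolding y1fun_def
    by (rule set_lebesgue_integral_cong) (auto simp: exp_add[symmetric] algebra_simps)
  also have "\<dots> = exp (-(w * t)) * (LINT s:{0..t}|lborel. exp (w * s) * f s)" by simp
  also have "(LINT s:{0..t}|lborel. exp (w * s) * f s) = exp (w * t) * (LINT s:{0..t}|lborel. f s)
     - (LINT r:{0..t}|lborel. w * exp (w * r) * (LINT s:{0..r}|lborel. f s))"
    by (rule ibp_exp_fubini[OF f_loc[OF t] t w_pos])
  also have "(LINT r:{0..t}|lborel. w * exp (w * r) * (LINT s:{0..r}|lborel. f s))
      = (LINT r:{0..t}|lborel. w * (exp (w * r) * F r))"
    by (rule set_lebesgue_integral_cong) (auto simp: LF_eq)
  also have "\<dots> = w * integral {0..t} (\<lambda>r. exp (w * r) * F r)"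
    by (simp add: cont_LINT[OF _ order_refl] continuous_intros F_cont)
  finally show ?thesis
    using LF_eq[OF t] by (simp add: Y1_def N_def algebra_simps exp_minus field_simps)
qed

lemma y2_eq: "0 \<le> t \<Longrightarrow> y2fun \<omega> f t = Y2 t"
proof -
  assume t: "0 \<le> t"
  have "y2fun \<omega> f t = (LINT s:{0..t}|lborel. exp (-(w * t)) * (exp (w * s) * Y1 s))"
    unfolding y2fun_def
    by (rule set_lebesgue_integral_cong) (auto simp: exp_add[symmetric] algebra_simps y1_eq)
  also have "\<dots> = exp (-(w * t)) * (LINT s:{0..t}|lborel. exp (w * s) * Y1 s)" by simp
  also have "(LINT s:{0..t}|lborel. exp (w * s) * Y1 s) = integral {0..t} (\<lambda>s. exp (w * s) * Y1 s)"
    by (simp add: cont_LINT[OF _ order_refl] continuous_intros Y1_cont)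
  finally show ?thesis by (simp add: Y2_def)
qed

lemma master:
  fixes \<phi> \<phi>d \<phi>dd :: "real \<Rightarrow> real"
  assumes T: "0 \<le> T"
    and d0: "\<And>s. s \<in> {0..T} \<Longrightarrow> (\<phi> has_real_derivative \<phi>d s) (at s within {0..T})"
    and d1: "\<And>s. s \<in> {0..T} \<Longrightarrow> (\<phi>d has_real_derivative \<phi>dd s) (at s within {0..T})"
  shows "\<phi> T * (w * N T - J T) + (\<phi> T * p T - \<phi>d T) * x T + (\<phi>d T - w * \<phi> T) * Y2 T
     = integral {0..T} (\<lambda>s. (\<phi>dd s - 2 * w * \<phi>d s + w^2 * \<phi> s) * Y2 s + (\<phi>d s * p s + \<phi> s * p' s - w * \<phi> s - \<phi>dd s) * x s)"
proof -
  define W where "W s = \<phi> s * (w * N s - J s) + (\<phi> s * p s - \<phi>d s) * x s + (\<phi>d s - w * \<phi> s) * Y2 s" for s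
  have W0: "W 0 = 0" by (simp add: W_def N_def J_def x0 Y2_def)
  have "((\<lambda>s. (\<phi>dd s - 2 * w * \<phi>d s + w^2 * \<phi> s) * Y2 s + (\<phi>d s * p s + \<phi> s * p' s - w * \<phi> s - \<phi>dd s) * x s)
        has_integral (W T - W 0)) {0..T}"
  proof (rule fundamental_theorem_of_calculus[OF T], unfold has_real_derivative_iff_has_vector_derivative[symmetric])
    fix s assume s: "s \<in> {0..T}"
    then have s0: "0 \<le> s" "s \<le> T" by auto
    note ds = d0[OF s] d1[OF s] N_deriv[OF s0] J_deriv[OF s0] Y2_deriv[OF s0]
      p_deriv_sub[OF order_refl s] x_deriv_sub[OF order_refl s]
    show "(W has_real_derivative (\<phi>dd s - 2 * w * \<phi>d s + w^2 * \<phi> s) * Y2 s + (\<phi>d s * p s + \<phi> s * p' s - w * \<phi> s - \<phi>dd s) * x s)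
       (at s within {0..T})"
      unfolding W_def[abs_def]
      by (rule derivative_eq_intros ds refl)+
         (simp add: Y1_def F_def g0_def algebra_simps power2_eq_square)
  qed
  then show ?thesis using W0 by (simp add: W_def integral_unique)
qed

end


context setting
begin

definition oA :: "(real \<Rightarrow> real) \<Rightarrow> bool" where
  "oA R \<longleftrightarrow> (\<forall>e>0. \<exists>T. \<forall>t\<ge>T. \<bar>R t\<bar> \<le> e * A t)"

lemma oA_iff_smallo: "oA R \<longleftrightarrow> R \<in> o[at_top](A)"
  unfolding oA_def smallo_def eventually_at_top_linorder using A_pos
  by (auto simp: abs_of_pos)

lemma oA_I: "(\<And>e. e > 0 \<Longrightarrow> \<exists>T. \<forall>t\<ge>T. \<bar>R t\<bar> \<le> e * A t) \<Longrightarrow> oA R"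
  unfolding oA_def by blast

lemma oA_D: "oA R \<Longrightarrow> e > 0 \<Longrightarrow> \<exists>T\<ge>0. \<forall>t\<ge>T. \<bar>R t\<bar> \<le> e * A t"
  unfolding oA_def by (metis max.cobounded1 max.coboundedI2 order_trans)

lemma oA_add: "oA R1 \<Longrightarrow> oA R2 \<Longrightarrow> oA (\<lambda>t. R1 t + R2 t)"
proof (rule oA_I)
  fix e :: real assume "oA R1" "oA R2" "e > 0"
  obtain T1 where T1: "\<forall>t\<ge>T1. \<bar>R1 t\<bar> \<le> (e/2) * A t" using oA_D[OF \<open>oA R1\<close>, of "e/2"] \<open>e>0\<close> by auto
  obtain T2 where T2: "\<forall>t\<ge>T2. \<bar>R2 t\<bar> \<le> (e/2) * A t" using oA_D[OF \<open>oA R2\<close>, of "e/2"] \<open>e>0\<close> by auto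
  show "\<exists>T. \<forall>t\<ge>T. \<bar>R1 t + R2 t\<bar> \<le> e * A t"
    by (rule exI[of _ "max T1 T2"]) (use T1 T2 in \<open>fastforce\<close>)
qed

lemma oA_cmult: "oA R \<Longrightarrow> oA (\<lambda>t. c * R t)"
proof (rule oA_I)
  fix e :: real assume "oA R" "e > 0"
  obtain T where T: "\<forall>t\<ge>T. \<bar>R t\<bar> \<le> (e/(\<bar>c\<bar>+1)) * A t" using oA_D[OF \<open>oA R\<close>, of "e/(\<bar>c\<bar>+1)"] \<open>e>0\<close> by auto
  show "\<exists>T. \<forall>t\<ge>T. \<bar>c * R t\<bar> \<le> e * A t"
  proof (intro exI allI impI)
    fix t assume "t \<ge> T"
    have "\<bar>c * R t\<bar> \<le> (\<bar>c\<bar>+1) * \<bar>R t\<bar>" by (simp add: abs_mult mult_right_mono)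
    also have "\<dots> \<le> (\<bar>c\<bar>+1) * ((e/(\<bar>c\<bar>+1)) * A t)" using T \<open>t \<ge> T\<close> by (intro mult_left_mono) auto
    also have "\<dots> = e * A t" by simp
    finally show "\<bar>c * R t\<bar> \<le> e * A t" .
  qed
qed

lemma oA_le: "oA R \<Longrightarrow> (\<And>t. t \<ge> Ta \<Longrightarrow> \<bar>S t\<bar> \<le> \<bar>R t\<bar>) \<Longrightarrow> oA S"
proof (rule oA_I)
  fix e :: real assume "oA R" "e > 0" and H: "\<And>t. t \<ge> Ta \<Longrightarrow> \<bar>S t\<bar> \<le> \<bar>R t\<bar>"
  obtain T where T: "\<forall>t\<ge>T. \<bar>R t\<bar> \<le> e * A t" using oA_D[OF \<open>oA R\<close> \<open>e>0\<close>] by auto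
  show "\<exists>T. \<forall>t\<ge>T. \<bar>S t\<bar> \<le> e * A t"
    by (rule exI[of _ "max T Ta"]) (use T H in \<open>fastforce\<close>)
qed

lemma oA_diff: "oA R1 \<Longrightarrow> oA R2 \<Longrightarrow> oA (\<lambda>t. R1 t - R2 t)"
  using oA_add[of R1 "\<lambda>t. (-1) * R2 t"] oA_cmult[of R2 "-1"] by simp

lemma oA_eq: "oA R \<Longrightarrow> (\<And>t. t \<ge> Ta \<Longrightarrow> S t = R t) \<Longrightarrow> oA S"
  by (rule oA_le[where Ta=Ta]) auto

lemma oA_const: "oA (\<lambda>t. c)"
proof (rule oA_I)
  fix e :: real assume "e > 0"
  from A_lim have "eventually (\<lambda>t. A t \<ge> \<bar>c\<bar> / e) at_top" by (simp add: filterlim_at_top)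
  then obtain T where "\<forall>t\<ge>T. A t \<ge> \<bar>c\<bar> / e" unfolding eventually_at_top_linorder by blast
  then show "\<exists>T. \<forall>t\<ge>T. \<bar>c\<bar> \<le> e * A t" using \<open>e > 0\<close> by (auto simp: field_simps)
qed

lemma oA_shift: "oA R \<Longrightarrow> 0 \<le> \<tau> \<Longrightarrow> oA (\<lambda>t. R (t + \<tau>))"
proof (rule oA_I)
  fix e :: real assume "oA R" "e > 0" "0 \<le> \<tau>"
  define K where "K = exp (p0 * \<tau> / 2)"
  have K: "K > 0" by (simp add: K_def)
  obtain T where T: "T \<ge> 0" "\<forall>t\<ge>T. \<bar>R t\<bar> \<le> (e / K) * A t" using oA_D[OF \<open>oA R\<close>, of "e/K"] \<open>e>0\<close> K by auto
  show "\<exists>T. \<forall>t\<ge>T. \<bar>R (t + \<tau>)\<bar> \<le> e * A t"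
  proof (intro exI[of _ T] allI impI)
    fix t assume "t \<ge> T"
    have "\<bar>R (t + \<tau>)\<bar> \<le> (e / K) * A (t + \<tau>)" using T \<open>t \<ge> T\<close> \<open>0 \<le> \<tau>\<close> by auto
    also have "A (t + \<tau>) \<le> K * A t" using A_shift[of t "t + \<tau>"] T \<open>t \<ge> T\<close> \<open>0 \<le> \<tau>\<close> by (simp add: K_def)
    then have "(e / K) * A (t + \<tau>) \<le> (e / K) * (K * A t)" using \<open>e>0\<close> K by (intro mult_left_mono) auto
    finally show "\<bar>R (t + \<tau>)\<bar> \<le> e * A t" using K by simp
  qed
qed

end


context setting
begin

lemma A_cont: "continuous_on {0..} A"
proof -
  have "continuous_on {0..} P" unfolding P_def[abs_def] by (rule int_cont[OF p_cont])
  then show ?thesis unfolding A_def'[abs_def] by (intro continuous_intros) auto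
qed

lemma A_deriv_sub: "0 \<le> a \<Longrightarrow> s \<in> {a..b} \<Longrightarrow> (A has_real_derivative (p s * A s / 2)) (at s within {a..b})"
  by (rule DERIV_subset[OF A_deriv[of s b]]) auto

lemma int_Ap: "0 \<le> a \<Longrightarrow> a \<le> b \<Longrightarrow> integral {a..b} (\<lambda>s. A s * p s) = 2 * (A b - A a)"
proof -
  assume ab: "0 \<le> a" "a \<le> b"
  have "((\<lambda>s. A s * p s) has_integral (2 * A b - 2 * A a)) {a..b}"
  proof (rule fundamental_theorem_of_calculus[OF ab(2)], unfold has_real_derivative_iff_has_vector_derivative[symmetric])
    fix s assume "s \<in> {a..b}"
    show "((\<lambda>s. 2 * A s) has_real_derivative A s * p s) (at s within {a..b})"
      by (rule derivative_eq_intros A_deriv_sub[OF ab(1) \<open>s \<in> {a..b}\<close>] refl | simp)+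
  qed
  then show ?thesis by (simp add: integral_unique)
qed

lemma int_split: "continuous_on {0..} g \<Longrightarrow> 0 \<le> a \<Longrightarrow> a \<le> b \<Longrightarrow>
   integral {0..b} g = integral {0..a} g + integral {a..b} g" for g :: "real \<Rightarrow> real"
  using Henstock_Kurzweil_Integration.integral_combine[where a=0 and c=a and b=b and f=g] cont_int[of g 0 b] by simp

lemma tendsto0_D: "(z \<longlongrightarrow> 0) at_top \<Longrightarrow> d > 0 \<Longrightarrow> \<exists>T\<ge>0. \<forall>s\<ge>T. \<bar>z s\<bar> \<le> d" for z :: "real \<Rightarrow> real"
proof -
  assume "(z \<longlongrightarrow> 0) at_top" "d > 0"
  then have "eventually (\<lambda>s. dist (z s) 0 < d) at_top"
    by (rule tendstoD)
  then have "eventually (\<lambda>s. \<bar>z s\<bar> < d) at_top" by (simp add: dist_real_def)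
  then obtain T where "\<forall>s\<ge>T. \<bar>z s\<bar> < d" unfolding eventually_at_top_linorder by blast
  then show ?thesis by (intro exI[of _ "max T 0"]) auto
qed

lemma int_negp'_bound: "0 \<le> a \<Longrightarrow> a \<le> b \<Longrightarrow> integral {a..b} (\<lambda>s. - (A s * p' s)) \<le> p0 * A b"
proof -
  assume ab: "0 \<le> a" "a \<le> b"
  have "integral {a..b} (\<lambda>s. - (A s * p' s)) \<le> integral {a..b} (\<lambda>s. - (A b * p' s))"
  proof (rule integral_le)
    show "(\<lambda>s. - (A s * p' s)) integrable_on {a..b}" using ab by (intro cont_int continuous_intros A_cont p'_cont)
    show "(\<lambda>s. - (A b * p' s)) integrable_on {a..b}" using ab by (intro cont_int continuous_intros A_cont p'_cont)
    fix s assume "s \<in> {a..b}"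
    then have "A s \<le> A b" "p' s < 0" using ab A_mono p'_neg by auto
    then show "- (A s * p' s) \<le> - (A b * p' s)" by (simp add: mult_right_mono_neg)
  qed
  also have "\<dots> = - (A b * (p b - p a))"
    using integral_unique[OF p'_int[OF ab]] by simp
  also have "\<dots> \<le> p0 * A b"
    using mult_right_mono[OF p_le_p0[of a] less_imp_le[OF A_pos[of b]]] mult_pos_pos[OF p_pos[of b] A_pos[of b]] ab
    by (simp add: algebra_simps)
  finally show ?thesis .
qed

lemma oA_weighted:
  assumes zc: "continuous_on {0..} z" and zl: "(z \<longlongrightarrow> 0) at_top"
    and kc: "continuous_on {0..} k" and kb: "\<And>s. s \<ge> 0 \<Longrightarrow> \<bar>k s\<bar> \<le> C * (p s - p' s)"
  shows "oA (\<lambda>t. integral {0..t} (\<lambda>s. A s * k s * z s))"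
proof (rule oA_I)
  fix e :: real assume e: "e > 0"
  define C' where "C' = \<bar>C\<bar>"
  have kb': "\<bar>k s\<bar> \<le> C' * (p s - p' s)" if "s \<ge> 0" for s
  proof -
    have "C * (p s - p' s) \<le> C' * (p s - p' s)"
      using p_pos[OF that] p'_neg[OF that] by (intro mult_right_mono) (auto simp: C'_def)
    then show ?thesis using kb[OF that] by linarith
  qed
  define d where "d = e / (2 * (C' * (2 + p0) + 1))"
  have C'0: "C' \<ge> 0" by (simp add: C'_def)
  have "C' * (2 + p0) \<ge> 0" using C'0 p0_pos by simp
  then have den: "2 * (C' * (2 + p0) + 1) > 0" by (simp add: add_nonneg_pos)
  then have d: "d > 0" using e unfolding d_def by (intro divide_pos_pos)
  obtain T where T: "T \<ge> 0" "\<forall>s\<ge>T. \<bar>z s\<bar> \<le> d" using tendsto0_D[OF zl d] by auto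
  define M where "M = \<bar>integral {0..T} (\<lambda>s. A s * k s * z s)\<bar>"
  obtain T2 where T2: "\<forall>t\<ge>T2. \<bar>M\<bar> \<le> (e/2) * A t"
    using oA_D[OF oA_const[of M], of "e/2"] e by auto
  have gc: "continuous_on {0..} (\<lambda>s. A s * k s * z s)" by (intro continuous_intros A_cont kc zc)
  show "\<exists>T. \<forall>t\<ge>T. \<bar>integral {0..t} (\<lambda>s. A s * k s * z s)\<bar> \<le> e * A t"
  proof (intro exI[of _ "max T T2"] allI impI)
    fix t assume t: "max T T2 \<le> t"
    then have tT: "T \<le> t" by simp
    have "norm (integral {T..t} (\<lambda>s. A s * k s * z s)) \<le> integral {T..t} (\<lambda>s. d * C' * (A s * p s + - (A s * p' s)))"
    proof (rule integral_norm_bound_integral)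
      show "(\<lambda>s. A s * k s * z s) integrable_on {T..t}" using T gc by (intro cont_int) auto
      show "(\<lambda>s. d * C' * (A s * p s + - (A s * p' s))) integrable_on {T..t}" using T
        by (intro cont_int continuous_intros A_cont p_cont p'_cont) auto
      fix s assume s: "s \<in> {T..t}"
      then have s0: "s \<ge> 0" using T by auto
      have "\<bar>A s * k s * z s\<bar> = A s * (\<bar>k s\<bar> * \<bar>z s\<bar>)" using A_pos[of s] by (simp add: abs_mult)
      also have "\<dots> \<le> A s * ((C' * (p s - p' s)) * d)"
        using kb'[OF s0] T s A_pos[of s] d
        by (intro mult_left_mono mult_mono) auto
      finally show "norm (A s * k s * z s) \<le> d * C' * (A s * p s + - (A s * p' s))" by (simp add: algebra_simps)
    qed
    then have "\<bar>integral {T..t} (\<lambda>s. A s * k s * z s)\<bar> \<le> integral {T..t} (\<lambda>s. d * C' * (A s * p s + - (A s * p' s)))"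
      by simp
    also have "\<dots> = d * C' * (integral {T..t} (\<lambda>s. A s * p s) + integral {T..t} (\<lambda>s. - (A s * p' s)))"
    proof -
      have i1: "(\<lambda>s. A s * p s) integrable_on {T..t}" using T by (intro cont_int continuous_intros A_cont p_cont) auto
      have i2: "(\<lambda>s. - (A s * p' s)) integrable_on {T..t}" using T by (intro cont_int continuous_intros A_cont p'_cont) auto
      show ?thesis
        by (simp only: integral_mult_right Henstock_Kurzweil_Integration.integral_add[OF i1 i2])
    qed
    also have "\<dots> \<le> d * C' * (2 * A t + p0 * A t)"
      using int_Ap[OF T(1) tT] int_negp'_bound[OF T(1) tT] A_pos[of T] d C'0
      by (intro mult_left_mono add_mono) auto
    also have "\<dots> = (d * (C' * (2 + p0))) * A t" by (simp add: algebra_simps)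
    also have "\<dots> \<le> (e / 2) * A t"
    proof (intro mult_right_mono)
      have "d * (C' * (2 + p0) + 1) = e / 2" using den by (simp add: d_def field_simps)
      then have "d * (C' * (2 + p0)) + d = e / 2" by (simp add: distrib_left)
      then show "d * (C' * (2 + p0)) \<le> e / 2" using d by linarith
    qed (use A_pos in \<open>auto intro: less_imp_le\<close>)
    finally have B1: "\<bar>integral {T..t} (\<lambda>s. A s * k s * z s)\<bar> \<le> (e / 2) * A t" .
    have "integral {0..t} (\<lambda>s. A s * k s * z s) = integral {0..T} (\<lambda>s. A s * k s * z s) + integral {T..t} (\<lambda>s. A s * k s * z s)"
      by (rule int_split[OF gc T(1) tT])
    then show "\<bar>integral {0..t} (\<lambda>s. A s * k s * z s)\<bar> \<le> e * A t"
      using B1 T2 t unfolding M_def by auto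
  qed
qed

end


context setting
begin

lemma oA_slow:
  assumes zc: "continuous_on {0..} z" and zl: "(z \<longlongrightarrow> 0) at_top"
    and gc: "continuous_on {0..} g" and gb: "\<And>s. \<bar>g s\<bar> \<le> 1" and tau: "0 \<le> \<tau>"
  shows "oA (\<lambda>t. integral {0..t+\<tau>} (\<lambda>s. A s * g s * z s) - integral {0..t} (\<lambda>s. A s * g s * z s))"
proof (rule oA_I)
  fix e :: real assume e: "e > 0"
  define K where "K = exp (p0 * \<tau> / 2)"
  have K: "K > 0" by (simp add: K_def)
  define d where "d = e / (\<tau> * K + 1)"
  have den: "\<tau> * K + 1 > 0" using K tau by (simp add: add_nonneg_pos)
  have d: "d > 0" using e den by (simp add: d_def)
  obtain T where T: "T \<ge> 0" "\<forall>s\<ge>T. \<bar>z s\<bar> \<le> d" using tendsto0_D[OF zl d] by auto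
  have hc: "continuous_on {0..} (\<lambda>s. A s * g s * z s)" by (intro continuous_intros A_cont gc zc)
  show "\<exists>T. \<forall>t\<ge>T. \<bar>integral {0..t+\<tau>} (\<lambda>s. A s * g s * z s) - integral {0..t} (\<lambda>s. A s * g s * z s)\<bar> \<le> e * A t"
  proof (intro exI[of _ T] allI impI)
    fix t assume tT: "t \<ge> T"
    have t0: "t \<ge> 0" using T tT by simp
    have "integral {0..t+\<tau>} (\<lambda>s. A s * g s * z s) - integral {0..t} (\<lambda>s. A s * g s * z s)
        = integral {t..t+\<tau>} (\<lambda>s. A s * g s * z s)"
      using int_split[OF hc t0, of "t+\<tau>"] tau by simp
    also have "norm \<dots> \<le> integral {t..t+\<tau>} (\<lambda>s. A (t+\<tau>) * d)"
    proof (rule integral_norm_bound_integral)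
      show "(\<lambda>s. A s * g s * z s) integrable_on {t..t+\<tau>}" using t0 by (intro cont_int hc)
      show "(\<lambda>s. A (t+\<tau>) * d) integrable_on {t..t+\<tau>}" by (intro integrable_continuous_interval continuous_intros)
      fix s assume s: "s \<in> {t..t+\<tau>}"
      have "norm (A s * g s * z s) = A s * (\<bar>g s\<bar> * \<bar>z s\<bar>)" using A_pos[of s] by (simp add: abs_mult)
      also have "\<dots> \<le> A (t+\<tau>) * (1 * d)"
        using A_mono[of s "t+\<tau>"] s t0 gb[of s] T tT A_pos[of s] d
        by (intro mult_mono) (auto intro: mult_mono)
      finally show "norm (A s * g s * z s) \<le> A (t+\<tau>) * d" by simp
    qed
    also have "\<dots> = \<tau> * (A (t+\<tau>) * d)" using tau by simp
    also have "\<dots> \<le> \<tau> * ((K * A t) * d)"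
      using A_shift[of t "t+\<tau>"] t0 tau d unfolding K_def by (intro mult_left_mono mult_right_mono) auto
    also have "\<dots> = (\<tau> * K * d) * A t" by simp
    also have "\<dots> \<le> e * A t"
    proof (rule mult_right_mono)
      have "(\<tau> * K + 1) * d = e" using den by (simp add: d_def)
      then show "\<tau> * K * d \<le> e" using d by (simp add: distrib_right)
    qed (use A_pos in \<open>auto intro: less_imp_le\<close>)
    finally show "\<bar>integral {0..t+\<tau>} (\<lambda>s. A s * g s * z s) - integral {0..t} (\<lambda>s. A s * g s * z s)\<bar> \<le> e * A t"
      by simp
  qed
qed

lemma exp_kernel_int:
  fixes c a t :: real
  assumes c: "c > 0" and ab: "a \<le> t"
  shows "integral {a..t} (\<lambda>s. exp (-(c * (t - s)))) \<le> 1 / c"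
proof -
  have dv: "\<And>s. s \<in> {a..t} \<Longrightarrow> ((\<lambda>s. exp (-(c * (t - s))) / c) has_vector_derivative exp (-(c * (t - s)))) (at s within {a..t})"
    unfolding has_real_derivative_iff_has_vector_derivative[symmetric]
    using c by (auto intro!: derivative_eq_intros)
  have "((\<lambda>s. exp (-(c * (t - s)))) has_integral (exp (-(c * (t - t))) / c - exp (-(c * (t - a))) / c)) {a..t}"
    using fundamental_theorem_of_calculus[OF ab dv] by simp
  then have "integral {a..t} (\<lambda>s. exp (-(c * (t - s)))) = 1 / c - exp (-(c * (t - a))) / c"
    by (simp add: integral_unique)
  also have "\<dots> \<le> 1 / c" using c by simp
  finally show ?thesis .
qed

lemma decay:
  assumes c: "c > 0" and zc: "continuous_on {0..} z" and zl: "(z \<longlongrightarrow> 0) at_top"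
  shows "((\<lambda>t. integral {0..t} (\<lambda>s. exp (-(c * (t - s))) * (1 - p' s) * \<bar>z s\<bar>)) \<longlongrightarrow> 0) at_top"
proof (rule tendstoI)
  fix e :: real assume e: "e > 0"
  define d where "d = e / (2 * (1 / c + p0) + 1)"
  have den: "2 * (1 / c + p0) + 1 > 0" using c p0_pos by (simp add: add_pos_pos)
  have d: "d > 0" using e den by (simp add: d_def)
  obtain T where T: "T \<ge> 0" "\<forall>s\<ge>T. \<bar>z s\<bar> \<le> d" using tendsto0_D[OF zl d] by auto
  define M where "M = integral {0..T} (\<lambda>s. exp (-(c * (T - s))) * (1 - p' s) * \<bar>z s\<bar>)"
  have "((\<lambda>t. exp (-(c * (t - T))) * M) \<longlongrightarrow> 0) at_top" using c by real_asymp
  then have "eventually (\<lambda>t. dist (exp (-(c * (t - T))) * M) 0 < e / 2) at_top"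
    using e by (intro tendstoD) auto
  then obtain T2 where T2: "\<forall>t\<ge>T2. \<bar>exp (-(c * (t - T))) * M\<bar> < e / 2"
    unfolding eventually_at_top_linorder by auto
  have "\<forall>t\<ge>max T T2. dist (integral {0..t} (\<lambda>s. exp (-(c * (t - s))) * (1 - p' s) * \<bar>z s\<bar>)) 0 < e"
  proof (intro allI impI)
    fix t assume tT: "max T T2 \<le> t"
    then have t0: "0 \<le> t" "T \<le> t" using T by auto
    define h where "h s = exp (-(c * (t - s))) * (1 - p' s) * \<bar>z s\<bar>" for s
    have hc: "continuous_on {0..} h" unfolding h_def[abs_def] by (intro continuous_intros zc p'_cont)
    have hnn: "0 \<le> h s" if "s \<ge> 0" for s using p'_neg[OF that] unfolding h_def by simp
    have split: "integral {0..t} h = integral {0..T} h + integral {T..t} h" by (rule int_split[OF hc T(1) t0(2)])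
    have "integral {0..T} h = integral {0..T} (\<lambda>s. exp (-(c * (t - T))) * (exp (-(c * (T - s))) * (1 - p' s) * \<bar>z s\<bar>))"
      unfolding h_def by (rule integral_cong) (simp add: exp_add[symmetric] algebra_simps)
    also have "\<dots> = exp (-(c * (t - T))) * M" unfolding M_def by simp
    finally have B1: "integral {0..T} h < e / 2" using T2 tT by auto
    have "integral {T..t} h \<le> integral {T..t} (\<lambda>s. d * exp (-(c * (t - s))) + d * (- p' s))"
    proof (rule integral_le)
      show "h integrable_on {T..t}" using T by (intro cont_int hc) auto
      show "(\<lambda>s. d * exp (-(c * (t - s))) + d * (- p' s)) integrable_on {T..t}"
        using T by (intro cont_int continuous_intros p'_cont) auto
      fix s assume s: "s \<in> {T..t}"
      then have s0: "s \<ge> 0" using T by auto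
      have ek: "exp (-(c * (t - s))) \<le> 1" using s c by simp
      have "h s = exp (-(c * (t - s))) * \<bar>z s\<bar> + exp (-(c * (t - s))) * (- p' s) * \<bar>z s\<bar>"
        unfolding h_def by (simp add: algebra_simps)
      also have "\<dots> \<le> exp (-(c * (t - s))) * d + 1 * (- p' s) * d"
        using T s ek p'_neg[OF s0] by (intro add_mono mult_mono) auto
      finally show "h s \<le> d * exp (-(c * (t - s))) + d * (- p' s)" by (simp add: algebra_simps)
    qed
    also have "\<dots> = d * integral {T..t} (\<lambda>s. exp (-(c * (t - s)))) + d * integral {T..t} (\<lambda>s. - p' s)"
    proof -
      have i1: "(\<lambda>s. d * exp (-(c * (t - s)))) integrable_on {T..t}" by (intro cont_int continuous_intros) (use T in auto)
      have i2: "(\<lambda>s. d * (- p' s)) integrable_on {T..t}" using T by (intro cont_int continuous_intros p'_cont) auto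
      show ?thesis by (simp only: Henstock_Kurzweil_Integration.integral_add[OF i1 i2] integral_mult_right)
    qed
    also have "\<dots> \<le> d * (1 / c) + d * p0"
    proof (intro add_mono mult_left_mono)
      show "integral {T..t} (\<lambda>s. exp (-(c * (t - s)))) \<le> 1 / c" by (rule exp_kernel_int[OF c t0(2)])
      have "integral {T..t} (\<lambda>s. - p' s) = - (p t - p T)" using integral_unique[OF p'_int[OF T(1) t0(2)]] by simp
      then show "integral {T..t} (\<lambda>s. - p' s) \<le> p0" using p_le_p0[OF T(1)] p_pos[OF t0(1)] by simp
    qed (use d in auto)
    also have "\<dots> < e / 2"
    proof -
      have "d * (2 * (1 / c + p0) + 1) = e" using den by (simp add: d_def)
      then show ?thesis using d by (simp add: algebra_simps)
    qed
    finally have B2: "integral {T..t} h < e / 2" .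
    have "0 \<le> integral {0..t} h" using t0 by (intro integral_nonneg cont_int hc hnn) auto
    then show "dist (integral {0..t} (\<lambda>s. exp (-(c * (t - s))) * (1 - p' s) * \<bar>z s\<bar>)) 0 < e"
      using split B1 B2 unfolding h_def[abs_def] by (simp add: dist_real_def)
  qed
  then show "eventually (\<lambda>t. dist (integral {0..t} (\<lambda>s. exp (-(c * (t - s))) * (1 - p' s) * \<bar>z s\<bar>)) 0 < e) at_top"
    unfolding eventually_at_top_linorder by blast
qed

end


context setting
begin

lemma gronwall_oA:
  assumes Nc: "continuous_on {0..} Nf" and Nnn: "\<And>t. t \<ge> 0 \<Longrightarrow> Nf t \<ge> 0"
    and Bc: "continuous_on {0..} B" and Bo: "oA B"
    and kc: "continuous_on {0..} k" and knn: "\<And>s. s \<ge> 0 \<Longrightarrow> k s \<ge> 0"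
    and Ta0: "Ta \<ge> 0" and ktail: "\<And>t. t \<ge> Ta \<Longrightarrow> integral {Ta..t} k \<le> 1/2"
    and ineq: "\<And>t. t \<ge> 0 \<Longrightarrow> Nf t \<le> B t + integral {0..t} (\<lambda>s. k s * Nf s)"
  shows "oA Nf"
proof (rule oA_I)
  fix e :: real assume e: "e > 0"
  define C0 where "C0 = integral {0..Ta} (\<lambda>s. k s * Nf s)"
  obtain T1' where T1': "\<forall>t\<ge>T1'. \<bar>B t\<bar> \<le> (e/4) * A t" using oA_D[OF Bo, of "e/4"] e by auto
  define T1 where "T1 = max T1' Ta"
  have T1: "T1 \<ge> Ta" "T1 \<ge> 0" "\<forall>t\<ge>T1. \<bar>B t\<bar> \<le> (e/4) * A t" using T1' Ta0 by (auto simp: T1_def)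
  have "continuous_on {0..T1} (\<lambda>s. \<bar>B s\<bar>)" using cont_sub[OF order_refl Bc, of T1] by (intro continuous_intros)
  then obtain sM where sM: "sM \<in> {0..T1}" "\<forall>s\<in>{0..T1}. \<bar>B s\<bar> \<le> \<bar>B sM\<bar>"
    using continuous_attains_sup[of "{0..T1}" "\<lambda>s. \<bar>B s\<bar>"] T1 by auto
  define M1 where "M1 = \<bar>B sM\<bar>"
  obtain T2 where T2: "\<forall>t\<ge>T2. \<bar>2 * (M1 + \<bar>C0\<bar>)\<bar> \<le> (e/2) * A t"
    using oA_D[OF oA_const[of "2 * (M1 + \<bar>C0\<bar>)"], of "e/2"] e by auto
  have kNc: "continuous_on {0..} (\<lambda>s. k s * Nf s)" by (intro continuous_intros kc Nc)
  show "\<exists>T. \<forall>t\<ge>T. \<bar>Nf t\<bar> \<le> e * A t"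
  proof (intro exI[of _ "max T1 T2"] allI impI)
    fix t assume tT: "max T1 T2 \<le> t"
    then have t: "T1 \<le> t" "T2 \<le> t" "0 \<le> t" "Ta \<le> t" using T1 by auto
    obtain ss where ss: "ss \<in> {Ta..t}" "\<forall>s\<in>{Ta..t}. Nf s \<le> Nf ss"
      using continuous_attains_sup[of "{Ta..t}" Nf] t cont_sub[OF Ta0 Nc, of t] by auto
    have ss0: "ss \<ge> 0" "Ta \<le> ss" "ss \<le> t" using ss Ta0 by auto
    have "integral {Ta..ss} (\<lambda>s. k s * Nf s) \<le> integral {Ta..ss} (\<lambda>s. k s * Nf ss)"
    proof (rule integral_le)
      show "(\<lambda>s. k s * Nf s) integrable_on {Ta..ss}" by (rule cont_int[OF kNc Ta0])
      show "(\<lambda>s. k s * Nf ss) integrable_on {Ta..ss}" by (intro cont_int[OF _ Ta0] continuous_intros kc)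
      fix s assume s: "s \<in> {Ta..ss}"
      then have "Nf s \<le> Nf ss" using ss ss0 by auto
      then show "k s * Nf s \<le> k s * Nf ss" using knn[of s] s Ta0 by (intro mult_left_mono) auto
    qed
    also have "\<dots> = integral {Ta..ss} k * Nf ss" by simp
    also have "\<dots> \<le> (1/2) * Nf ss" using ktail[OF ss0(2)] Nnn[OF ss0(1)] by (intro mult_right_mono) auto
    finally have I2: "integral {Ta..ss} (\<lambda>s. k s * Nf s) \<le> (1/2) * Nf ss" .
    have "integral {0..ss} (\<lambda>s. k s * Nf s) = C0 + integral {Ta..ss} (\<lambda>s. k s * Nf s)"
      unfolding C0_def by (rule int_split[OF kNc Ta0 ss0(2)])
    then have "Nf ss \<le> B ss + C0 + (1/2) * Nf ss" using ineq[OF ss0(1)] I2 by simp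
    moreover have "B ss \<le> M1 + (e/4) * A t"
    proof (cases "ss \<le> T1")
      case True
      then have "\<bar>B ss\<bar> \<le> M1" using sM ss0 unfolding M1_def by auto
      moreover have "0 \<le> (e/4) * A t" using e A_pos[of t] by simp
      ultimately show ?thesis by simp
    next
      case False
      then have "\<bar>B ss\<bar> \<le> (e/4) * A ss" using T1 by simp
      also have "\<dots> \<le> (e/4) * A t" using A_mono[OF ss0(1) ss0(3)] e by simp
      finally show ?thesis unfolding M1_def by simp
    qed
    ultimately have "Nf ss \<le> 2 * (M1 + \<bar>C0\<bar>) + (e/2) * A t" by simp
    moreover have "Nf t \<le> Nf ss" using ss t by auto
    moreover have "2 * (M1 + \<bar>C0\<bar>) \<le> (e/2) * A t"
    proof -
      have "\<bar>2 * (M1 + \<bar>C0\<bar>)\<bar> \<le> (e/2) * A t" using T2 t by blast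
      then show ?thesis by linarith
    qed
    ultimately show "\<bar>Nf t\<bar> \<le> e * A t" using Nnn[OF t(3)] by simp
  qed
qed

end


context setting
begin

definition kap where "kap t s = (w * (t - s) - 1) * p s + (t - s) * p' s - (w + w^2) * (t - s) + 2 * w"

lemma x_minus_Y2:
  assumes t: "0 \<le> t"
  shows "x t - Y2 t = integral {0..t} (\<lambda>s. exp (-(w * (t - s))) * kap t s * x s)"
proof -
  have m: "(t - t) * exp (w * t) * (w * N t - J t) + ((t - t) * exp (w * t) * p t - (w * (t - t) - 1) * exp (w * t)) * x t
       + ((w * (t - t) - 1) * exp (w * t) - w * ((t - t) * exp (w * t))) * Y2 t
     = integral {0..t} (\<lambda>s. ((w^2 * (t - s) - 2 * w) * exp (w * s) - 2 * w * ((w * (t - s) - 1) * exp (w * s)) + w^2 * ((t - s) * exp (w * s))) * Y2 s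
        + ((w * (t - s) - 1) * exp (w * s) * p s + (t - s) * exp (w * s) * p' s - w * ((t - s) * exp (w * s)) - (w^2 * (t - s) - 2 * w) * exp (w * s)) * x s)"
  proof (rule master[OF t, where \<phi>="\<lambda>s. (t - s) * exp (w * s)" and \<phi>d="\<lambda>s. (w * (t - s) - 1) * exp (w * s)"])
    fix s assume "s \<in> {0..t}"
    show "((\<lambda>s. (t - s) * exp (w * s)) has_real_derivative (w * (t - s) - 1) * exp (w * s)) (at s within {0..t})"
      by (rule derivative_eq_intros refl | simp)+ (simp add: algebra_simps)
    show "((\<lambda>s. (w * (t - s) - 1) * exp (w * s)) has_real_derivative (w^2 * (t - s) - 2 * w) * exp (w * s)) (at s within {0..t})"
      by (rule derivative_eq_intros refl | simp)+ (simp add: algebra_simps power2_eq_square eval_nat_numeral)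
  qed
  have "integral {0..t} (\<lambda>s. ((w^2 * (t - s) - 2 * w) * exp (w * s) - 2 * w * ((w * (t - s) - 1) * exp (w * s)) + w^2 * ((t - s) * exp (w * s))) * Y2 s
        + ((w * (t - s) - 1) * exp (w * s) * p s + (t - s) * exp (w * s) * p' s - w * ((t - s) * exp (w * s)) - (w^2 * (t - s) - 2 * w) * exp (w * s)) * x s)
      = integral {0..t} (\<lambda>s. exp (w * t) * (exp (-(w * (t - s))) * kap t s * x s))"
  proof (rule integral_cong)
    fix s
    have ex: "exp (w * t) * exp (-(w * (t - s))) = exp (w * s)" by (simp add: mult_exp_exp algebra_simps)
    have c1: "(w^2 * (t - s) - 2 * w) * exp (w * s) - 2 * w * ((w * (t - s) - 1) * exp (w * s)) + w^2 * ((t - s) * exp (w * s)) = 0"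
      by (simp add: algebra_simps power2_eq_square)
    have c2: "(w * (t - s) - 1) * exp (w * s) * p s + (t - s) * exp (w * s) * p' s - w * ((t - s) * exp (w * s)) - (w^2 * (t - s) - 2 * w) * exp (w * s)
        = exp (w * s) * kap t s"
      by (simp add: kap_def algebra_simps power2_eq_square)
    show "((w^2 * (t - s) - 2 * w) * exp (w * s) - 2 * w * ((w * (t - s) - 1) * exp (w * s)) + w^2 * ((t - s) * exp (w * s))) * Y2 s
        + ((w * (t - s) - 1) * exp (w * s) * p s + (t - s) * exp (w * s) * p' s - w * ((t - s) * exp (w * s)) - (w^2 * (t - s) - 2 * w) * exp (w * s)) * x s
      = exp (w * t) * (exp (-(w * (t - s))) * kap t s * x s)"
    proof -
      have "exp (w * s) * kap t s * x s = exp (w * t) * (exp (-(w * (t - s))) * kap t s * x s)"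
        by (subst ex[symmetric]) (simp only: mult.assoc)
      then show ?thesis by (simp only: c1 c2)
    qed
  qed
  also have "\<dots> = exp (w * t) * integral {0..t} (\<lambda>s. exp (-(w * (t - s))) * kap t s * x s)" by simp
  finally have "exp (w * t) * (x t - Y2 t) = exp (w * t) * integral {0..t} (\<lambda>s. exp (-(w * (t - s))) * kap t s * x s)"
    using m by (simp add: algebra_simps)
  then show ?thesis by simp
qed

definition C0k where "C0k = w * p0 + w + w^2 + p0 + 2 * w + 1"

lemma kap_bound:
  assumes s: "0 \<le> s" "s \<le> t"
  shows "exp (-(w * (t - s))) * \<bar>kap t s\<bar> \<le> (C0k * (1 + 2 / w)) * (exp (-((w/2) * (t - s))) * (1 - p' s))"
proof -
  define u where "u = t - s"
  have u: "u \<ge> 0" using s by (simp add: u_def)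
  have pp: "0 < p s" "p s \<le> p0" "p' s < 0" using p_pos[OF s(1)] p_le_p0[OF s(1)] p'_neg[OF s(1)] by auto
  have w0: "w > 0" by (rule w_pos)
  have tri: "\<bar>a + b - c + d\<bar> \<le> \<bar>a\<bar> + \<bar>b\<bar> + \<bar>c\<bar> + \<bar>d\<bar>" for a b c d :: real by arith
  have a1: "\<bar>(w * u - 1) * p s\<bar> \<le> (w * u + 1) * p s"
    using pp u w0 by (simp add: abs_mult abs_le_iff mult_nonneg_nonneg) 
  have a2: "\<bar>u * p' s\<bar> = u * (- p' s)" using u pp by (simp add: abs_mult)
  have a3: "\<bar>(w + w^2) * u\<bar> = (w + w^2) * u" using u w0 by simp
  have a4: "\<bar>2 * w\<bar> = 2 * w" using w0 by simp
  have "\<bar>kap t s\<bar> \<le> (w * u + 1) * p s + u * (- p' s) + (w + w^2) * u + 2 * w"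
    unfolding kap_def u_def[symmetric] using tri[of "(w * u - 1) * p s" "u * p' s" "(w + w^2) * u" "2 * w"] a1 a2 a3 a4
    by linarith
  also have "\<dots> \<le> (w * u + 1) * p0 + u * (- p' s) + (w + w^2) * u + 2 * w"
    using pp u w0 by (intro add_mono mult_left_mono) auto
  also have "\<dots> \<le> C0k * ((1 + u) * (1 - p' s))"
  proof -
    have "C0k \<ge> 1" unfolding C0k_def using w0 p0_pos by (simp add: add_nonneg_nonneg)
    then have "1 * (u * (- p' s)) \<le> C0k * (u * (- p' s))" using u pp by (intro mult_right_mono) (auto simp: mult_nonneg_nonpos)
    then have "u * (- p' s) \<le> C0k * (u * (- p' s))" by simp
    moreover have "(w * p0 + w + w^2) * u \<le> C0k * u" using u p0_pos w0 unfolding C0k_def by (intro mult_right_mono) auto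
    moreover have "p0 + 2 * w \<le> C0k" using w0 p0_pos unfolding C0k_def by simp
    moreover have "C0k \<ge> 0" using \<open>C0k \<ge> 1\<close> by simp
    moreover have "C0k * ((1 + u) * (1 - p' s)) = C0k + C0k * u + C0k * (- p' s) + C0k * (u * (- p' s))"
      by (simp add: algebra_simps)
    moreover have "(w * u + 1) * p0 + u * (- p' s) + (w + w^2) * u + 2 * w = (w * p0 + w + w^2) * u + (p0 + 2 * w) + u * (- p' s)"
      by (simp add: algebra_simps)
    moreover have "0 \<le> C0k * (- p' s)" using \<open>C0k \<ge> 0\<close> pp by (intro mult_nonneg_nonneg) auto
    ultimately show ?thesis by linarith
  qed
  finally have k1: "\<bar>kap t s\<bar> \<le> C0k * ((1 + u) * (1 - p' s))" .
  have e1: "exp (-(w * u)) * (1 + u) \<le> (1 + 2 / w) * exp (-((w/2) * u))"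
  proof -
    have f1: "exp (-(w * u)) \<le> exp (-((w/2) * u))" using u w0 by simp
    have f2: "u * exp (-(w * u)) \<le> (2 / w) * exp (-((w/2) * u))"
    proof -
      have "w * u / 2 \<le> exp (w * u / 2)" using exp_ge_add_one_self[of "w * u / 2"] by linarith
      then have "w * u \<le> exp (w * u / 2) * 2" by linarith
      then have "u \<le> (2 / w) * exp (w * u / 2)" using w0 by (simp add: field_simps)
      then have "u * exp (-(w * u)) \<le> (2 / w) * exp (w * u / 2) * exp (-(w * u))" by (intro mult_right_mono) auto
      also have "\<dots> = (2 / w) * exp (-((w/2) * u))" by (simp add: exp_add[symmetric] field_simps)
      finally show ?thesis .
    qed
    have f3: "exp (-(w * u)) * (1 + u) = exp (-(w * u)) + u * exp (-(w * u))" by (simp add: algebra_simps)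
    have f4: "(1 + 2 / w) * exp (-((w/2) * u)) = exp (-((w/2) * u)) + (2 / w) * exp (-((w/2) * u))" by (simp add: algebra_simps)
    show ?thesis using f1 f2 f3 f4 by linarith
  qed
  have "exp (-(w * u)) * \<bar>kap t s\<bar> \<le> exp (-(w * u)) * (C0k * ((1 + u) * (1 - p' s)))"
    using k1 by (intro mult_left_mono) auto
  also have "\<dots> = C0k * (1 - p' s) * (exp (-(w * u)) * (1 + u))" by (simp add: algebra_simps)
  also have "\<dots> \<le> C0k * (1 - p' s) * ((1 + 2 / w) * exp (-((w/2) * u)))"
    using e1 pp unfolding C0k_def using w0 p0_pos
    by (intro mult_left_mono) (auto simp: add_nonneg_nonneg)
  also have "\<dots> = (C0k * (1 + 2 / w)) * (exp (-((w/2) * u)) * (1 - p' s))" by (simp only: mult_ac)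
  finally show ?thesis unfolding u_def .
qed

lemma tendsto_at_top_cong0: "(\<And>t. t \<ge> 0 \<Longrightarrow> g t = h t) \<Longrightarrow> (g \<longlongrightarrow> l) at_top \<longleftrightarrow> (h \<longlongrightarrow> l) at_top"
  for g h :: "real \<Rightarrow> real"
  by (rule tendsto_cong) (auto simp: eventually_at_top_linorder)

lemma Y2_lim:
  assumes xl: "(x \<longlongrightarrow> 0) at_top"
  shows "(Y2 \<longlongrightarrow> 0) at_top"
proof -
  define I where "I t = integral {0..t} (\<lambda>s. exp (-((w/2) * (t - s))) * (1 - p' s) * \<bar>x s\<bar>)" for t
  have Il: "(I \<longlongrightarrow> 0) at_top" unfolding I_def[abs_def]
    by (rule decay) (use w_pos x_cont xl in auto)
  have b: "\<bar>x t - Y2 t\<bar> \<le> (C0k * (1 + 2 / w)) * I t" if t: "t \<ge> 0" for t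
  proof -
    have "norm (integral {0..t} (\<lambda>s. exp (-(w * (t - s))) * kap t s * x s))
       \<le> integral {0..t} (\<lambda>s. (C0k * (1 + 2 / w)) * (exp (-((w/2) * (t - s))) * (1 - p' s) * \<bar>x s\<bar>))"
    proof (rule integral_norm_bound_integral)
      show "(\<lambda>s. exp (-(w * (t - s))) * kap t s * x s) integrable_on {0..t}"
        unfolding kap_def by (intro cont_int continuous_intros p_cont p'_cont x_cont) auto
      show "(\<lambda>s. (C0k * (1 + 2 / w)) * (exp (-((w/2) * (t - s))) * (1 - p' s) * \<bar>x s\<bar>)) integrable_on {0..t}"
        by (intro cont_int continuous_intros p'_cont x_cont) auto
      fix s assume s: "s \<in> {0..t}"
      have "norm (exp (-(w * (t - s))) * kap t s * x s) = (exp (-(w * (t - s))) * \<bar>kap t s\<bar>) * \<bar>x s\<bar>"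
        by (simp add: abs_mult)
      also have "\<dots> \<le> ((C0k * (1 + 2 / w)) * (exp (-((w/2) * (t - s))) * (1 - p' s))) * \<bar>x s\<bar>"
        using kap_bound[of s t] s by (intro mult_right_mono) auto
      finally show "norm (exp (-(w * (t - s))) * kap t s * x s) \<le> (C0k * (1 + 2 / w)) * (exp (-((w/2) * (t - s))) * (1 - p' s) * \<bar>x s\<bar>)"
        by (simp add: algebra_simps)
    qed
    then show ?thesis using x_minus_Y2[OF t] unfolding I_def by simp
  qed
  have "((\<lambda>t. (C0k * (1 + 2 / w)) * I t) \<longlongrightarrow> 0) at_top"
    using tendsto_mult_right_zero[OF Il] by simp
  then have "((\<lambda>t. x t - Y2 t) \<longlongrightarrow> 0) at_top"
    apply (rule Lim_null_comparison[rotated])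
    using b by (auto simp: eventually_at_top_linorder intro!: exI[of _ 0])
  then have "((\<lambda>t. x t - (x t - Y2 t)) \<longlongrightarrow> 0 - 0) at_top" by (intro tendsto_diff xl)
  then show ?thesis by simp
qed

end


context setting
begin

definition q where "q s = (p s)^2 / 4 + p' s / 2"

lemma q_cont: "continuous_on {0..} q"
  unfolding q_def[abs_def] by (intro continuous_intros p_cont p'_cont) auto

definition Wg where "Wg g gd t = A t * (g t * (w * N t - J t) + (p t * g t / 2 - gd t) * x t + (gd t + p t * g t / 2 - w * g t) * Y2 t)"

definition rg where "rg g gd s = p s * gd s + q s * g s - w * p s * g s"

lemma inst_g:
  assumes dg: "\<And>s. (g has_real_derivative gd s) (at s)"
    and dgd: "\<And>s. (gd has_real_derivative (-(w * g s))) (at s)"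
    and T: "0 \<le> T"
  shows "Wg g gd T = integral {0..T} (\<lambda>s. A s * ((w^2 - w) * g s - 2 * w * gd s + rg g gd s) * Y2 s + A s * (g s * q s) * x s)"
proof -
  have d0: "((\<lambda>s. g s * A s) has_real_derivative (A s * (gd s + p s * g s / 2))) (at s within {0..T})"
    if s: "s \<in> {0..T}" for s
  proof -
    have s0: "0 \<le> s" "s \<le> T" using s by auto
    show ?thesis
      by (rule derivative_eq_intros has_field_derivative_at_within[OF dg] A_deriv[OF s0] refl)+
         (simp add: algebra_simps)
  qed
  have d1: "((\<lambda>s. A s * (gd s + p s * g s / 2)) has_real_derivative (A s * (-(w * g s) + p s * gd s + q s * g s))) (at s within {0..T})"
    if s: "s \<in> {0..T}" for s
  proof -
    have s0: "0 \<le> s" "s \<le> T" using s by auto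
    have h1: "((\<lambda>s. p s * g s) has_real_derivative (p' s * g s + gd s * p s)) (at s within {0..T})"
      by (rule DERIV_mult[OF p_deriv_sub[OF order_refl s] has_field_derivative_at_within[OF dg]])
    have h2: "((\<lambda>s. gd s + p s * g s / 2) has_real_derivative (-(w * g s) + (p' s * g s + gd s * p s) / 2)) (at s within {0..T})"
      by (rule DERIV_add[OF has_field_derivative_at_within[OF dgd] DERIV_cdivide[OF h1]])
    have h3: "((\<lambda>s. A s * (gd s + p s * g s / 2)) has_real_derivative
        (p s * A s / 2 * (gd s + p s * g s / 2) + (-(w * g s) + (p' s * g s + gd s * p s) / 2) * A s)) (at s within {0..T})"
      by (rule DERIV_mult[OF A_deriv[OF s0] h2])
    show ?thesis
      by (rule DERIV_cong[OF h3]) (simp add: field_simps q_def power2_eq_square)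
  qed
  note m = master[OF T d0 d1]
  have "Wg g gd T = g T * A T * (w * N T - J T) + (g T * A T * p T - A T * (gd T + p T * g T / 2)) * x T +
    (A T * (gd T + p T * g T / 2) - w * (g T * A T)) * Y2 T"
    by (simp add: Wg_def algebra_simps)
  also note m
  also have "integral {0..T} (\<lambda>s. (A s * (- (w * g s) + p s * gd s + q s * g s) - 2 * w * (A s * (gd s + p s * g s / 2)) + w\<^sup>2 * (g s * A s)) * Y2 s +
          (A s * (gd s + p s * g s / 2) * p s + g s * A s * p' s - w * (g s * A s) - A s * (- (w * g s) + p s * gd s + q s * g s)) * x s)
     = integral {0..T} (\<lambda>s. A s * ((w^2 - w) * g s - 2 * w * gd s + rg g gd s) * Y2 s + A s * (g s * q s) * x s)"
    by (rule integral_cong) (simp add: rg_def q_def algebra_simps power2_eq_square)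
  finally show ?thesis .
qed

abbreviation "gC \<equiv> (\<lambda>s. cos (\<omega> * s))"
abbreviation "gCd \<equiv> (\<lambda>s. - (\<omega> * sin (\<omega> * s)))"
abbreviation "gS \<equiv> (\<lambda>s. sin (\<omega> * s))"
abbreviation "gSd \<equiv> (\<lambda>s. \<omega> * cos (\<omega> * s))"

lemma dgc: "(gC has_real_derivative gCd s) (at s)"
  by (rule derivative_eq_intros refl | simp)+
lemma dgcd: "(gCd has_real_derivative (-(w * gC s))) (at s)"
  by (rule derivative_eq_intros refl | simp)+ (simp add: power2_eq_square)
lemma dgs: "(gS has_real_derivative gSd s) (at s)"
  by (rule derivative_eq_intros refl | simp)+
lemma dgsd: "(gSd has_real_derivative (-(w * gS s))) (at s)"
  by (rule derivative_eq_intros refl | simp)+ (simp add: power2_eq_square)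

lemma osc_alg: "sn * (a * (c * D + (pp * c / 2 - -(om * sn)) * X + (-(om * sn) + pp * c / 2 - om\<^sup>2 * c) * Y))
   - c * (a * (sn * D + (pp * sn / 2 - om * c) * X + (om * c + pp * sn / 2 - om\<^sup>2 * sn) * Y))
   = om * a * (X - Y) * (sn\<^sup>2 + c\<^sup>2)" for sn a c D pp om X Y :: real
  by (simp add: algebra_simps power2_eq_square)

lemma osc_identity: "sin (\<omega> * t) * Wg gC gCd t - cos (\<omega> * t) * Wg gS gSd t = \<omega> * A t * (x t - Y2 t)"
proof -
  have "sin (\<omega> * t) * Wg gC gCd t - cos (\<omega> * t) * Wg gS gSd t = \<omega> * A t * (x t - Y2 t) * ((sin (\<omega> * t))\<^sup>2 + (cos (\<omega> * t))\<^sup>2)"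
    unfolding Wg_def by (rule osc_alg)
  then show ?thesis by simp
qed

lemma int_lin4:
  fixes a b c d :: "real \<Rightarrow> real" and c1 c2 t :: real
  assumes "continuous_on {0..} a" "continuous_on {0..} b" "continuous_on {0..} c" "continuous_on {0..} d" "0 \<le> t"
  shows "integral {0..t} (\<lambda>s. c1 * a s + c2 * b s + c s + d s) = c1 * integral {0..t} a + c2 * integral {0..t} b + integral {0..t} c + integral {0..t} d"
proof -
  have i: "g integrable_on {0..t}" if "continuous_on {0..} g" for g :: "real \<Rightarrow> real" using that by (rule cont_int) simp
  have "((\<lambda>s. c1 * a s + c2 * b s + c s + d s) has_integral (c1 * integral {0..t} a + c2 * integral {0..t} b + integral {0..t} c + integral {0..t} d)) {0..t}"
    by (intro has_integral_add has_integral_mult_right integrable_integral i assms)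
  then show ?thesis by (rule integral_unique)
qed

definition Kc where "Kc t = integral {0..t} (\<lambda>s. A s * gC s * Y2 s)"
definition Ks where "Ks t = integral {0..t} (\<lambda>s. A s * gS s * Y2 s)"
definition Rc where "Rc t = integral {0..t} (\<lambda>s. A s * rg gC gCd s * Y2 s)"
definition Rs where "Rs t = integral {0..t} (\<lambda>s. A s * rg gS gSd s * Y2 s)"
definition Qc where "Qc t = integral {0..t} (\<lambda>s. A s * (gC s * q s) * x s)"
definition Qs where "Qs t = integral {0..t} (\<lambda>s. A s * (gS s * q s) * x s)"

abbreviation "\<alpha> \<equiv> w^2 - w"
abbreviation "\<beta> \<equiv> 2 * w * \<omega>"

lemma rg_cont: "continuous_on {0..} g \<Longrightarrow> continuous_on {0..} gd \<Longrightarrow> continuous_on {0..} (rg g gd)"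
  unfolding rg_def[abs_def] by (intro continuous_intros p_cont q_cont)

lemma Wc_decomp: "0 \<le> t \<Longrightarrow> Wg gC gCd t = \<alpha> * Kc t + \<beta> * Ks t + Rc t + Qc t"
proof -
  assume t: "0 \<le> t"
  have "Wg gC gCd t = integral {0..t} (\<lambda>s. \<alpha> * (A s * gC s * Y2 s) + \<beta> * (A s * gS s * Y2 s) + A s * rg gC gCd s * Y2 s + A s * (gC s * q s) * x s)"
    unfolding inst_g[OF dgc dgcd t] by (rule integral_cong) (simp add: algebra_simps)
  also have "\<dots> = \<alpha> * Kc t + \<beta> * Ks t + Rc t + Qc t"
    unfolding Kc_def Ks_def Rc_def Qc_def
    by (rule int_lin4[OF _ _ _ _ t]) (intro continuous_intros A_cont Y2_cont x_cont q_cont rg_cont)+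
  finally show ?thesis .
qed

lemma Ws_decomp: "0 \<le> t \<Longrightarrow> Wg gS gSd t = \<alpha> * Ks t + (- \<beta>) * Kc t + Rs t + Qs t"
proof -
  assume t: "0 \<le> t"
  have "Wg gS gSd t = integral {0..t} (\<lambda>s. \<alpha> * (A s * gS s * Y2 s) + (- \<beta>) * (A s * gC s * Y2 s) + A s * rg gS gSd s * Y2 s + A s * (gS s * q s) * x s)"
    unfolding inst_g[OF dgs dgsd t] by (rule integral_cong) (simp add: algebra_simps)
  also have "\<dots> = \<alpha> * Ks t + (- \<beta>) * Kc t + Rs t + Qs t"
    unfolding Kc_def Ks_def Rs_def Qs_def
    by (rule int_lin4[OF _ _ _ _ t]) (intro continuous_intros A_cont Y2_cont x_cont q_cont rg_cont)+
  finally show ?thesis .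
qed

end


lemma mono_tail:
  fixes F :: "real \<Rightarrow> real"
  assumes mono: "\<And>a b. 0 \<le> a \<Longrightarrow> a \<le> b \<Longrightarrow> F a \<le> F b" and bd: "\<And>t. t \<ge> 0 \<Longrightarrow> F t \<le> M" and e: "e > 0"
  shows "\<exists>Ta\<ge>0. \<forall>t\<ge>Ta. F t - F Ta \<le> e"
proof -
  define S where "S = Sup (F ` {0..})"
  have bdd: "bdd_above (F ` {0..})" using bd by (auto intro!: bdd_aboveI[of _ M])
  have ne: "F ` {0..} \<noteq> {}" by auto
  have "S - e < S" using e by simp
  then obtain Ta where Ta: "Ta \<ge> 0" "S - e < F Ta" using less_cSupD[OF ne, of "S - e"] unfolding S_def by auto
  have "F t \<le> S" if "t \<ge> 0" for t unfolding S_def using that bdd by (intro cSup_upper) auto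
  then show ?thesis
  proof (intro exI[of _ Ta] conjI allI impI)
    fix t assume "t \<ge> Ta"
    then have "F t \<le> S" using \<open>\<And>t. t \<ge> 0 \<Longrightarrow> F t \<le> S\<close> Ta by auto
    then show "F t - F Ta \<le> e" using Ta by linarith
  qed (use Ta in auto)
qed

context setting
begin

definition Cq where "Cq = p0 / 4 + 1 / 2"

lemma q_bound: "s \<ge> 0 \<Longrightarrow> \<bar>q s\<bar> \<le> Cq * (p s - p' s)"
proof -
  assume s: "s \<ge> 0"
  have pp: "0 < p s" "p s \<le> p0" "p' s < 0" using p_pos[OF s] p_le_p0[OF s] p'_neg[OF s] by auto
  have "(p s)^2 \<le> p0 * p s" using pp by (simp add: power2_eq_square mult_right_mono)
  moreover have "\<bar>q s\<bar> \<le> (p s)^2 / 4 + (- p' s) / 2" using pp unfolding q_def by (simp add: abs_le_iff)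
  ultimately have "\<bar>q s\<bar> \<le> (p0 * p s) / 4 + (- p' s) / 2" by linarith
  also have "\<dots> \<le> Cq * (p s - p' s)"
  proof -
    have "Cq * (p s - p' s) = (p0 * p s) / 4 + (p0 * (- p' s)) / 4 + p s / 2 + (- p' s) / 2"
      by (simp add: Cq_def field_simps)
    moreover have "0 \<le> p0 * (- p' s)" using pp p0_pos by (intro mult_nonneg_nonneg) auto
    ultimately show ?thesis using pp by linarith
  qed
  finally show ?thesis .
qed

lemma Cq_pos: "Cq > 0" unfolding Cq_def using p0_pos by simp

definition Cr where "Cr = \<omega> + w + Cq"

lemma rg_bound:
  assumes g1: "\<And>s. \<bar>g s\<bar> \<le> 1" and gd1: "\<And>s. \<bar>gd s\<bar> \<le> \<omega>" and s: "s \<ge> 0"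
  shows "\<bar>rg g gd s\<bar> \<le> Cr * (p s - p' s)"
proof -
  have pp: "0 < p s" "p' s < 0" using p_pos[OF s] p'_neg[OF s] by auto
  have "\<bar>rg g gd s\<bar> \<le> \<bar>p s * gd s\<bar> + \<bar>q s * g s\<bar> + \<bar>w * p s * g s\<bar>" unfolding rg_def by linarith
  also have "\<dots> \<le> p s * \<omega> + \<bar>q s\<bar> * 1 + w * p s * 1"
  proof (intro add_mono)
    show "\<bar>p s * gd s\<bar> \<le> p s * \<omega>" using pp gd1[of s] by (simp add: abs_mult mult_left_mono)
    show "\<bar>q s * g s\<bar> \<le> \<bar>q s\<bar> * 1" using mult_left_le[of "\<bar>g s\<bar>" "\<bar>q s\<bar>"] g1[of s] by (simp add: abs_mult)
    show "\<bar>w * p s * g s\<bar> \<le> w * p s * 1" using g1[of s] pp w_pos by (simp add: abs_mult mult_left_mono)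
  qed
  also have "\<dots> \<le> \<omega> * (p s - p' s) + Cq * (p s - p' s) + w * (p s - p' s)"
    using q_bound[OF s] pp \<omega>_pos w_pos mult_nonneg_nonpos[of \<omega> "p' s"] mult_nonpos_nonneg[of "p' s" w]
    by (intro add_mono) (auto simp: algebra_simps)
  also have "\<dots> = Cr * (p s - p' s)" unfolding Cr_def by (simp add: algebra_simps)
  finally show ?thesis .
qed

lemma oA_of_tendsto0: "(z \<longlongrightarrow> 0) at_top \<Longrightarrow> oA (\<lambda>t. A t * z t)"
proof (rule oA_I)
  fix e :: real assume zl: "(z \<longlongrightarrow> 0) at_top" and e: "e > 0"
  obtain T where T: "T \<ge> 0" "\<forall>s\<ge>T. \<bar>z s\<bar> \<le> e" using tendsto0_D[OF zl e] by auto
  show "\<exists>T. \<forall>t\<ge>T. \<bar>A t * z t\<bar> \<le> e * A t"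
  proof (intro exI[of _ T] allI impI)
    fix t assume "t \<ge> T"
    then have "\<bar>z t\<bar> * A t \<le> e * A t" using T A_pos[of t] by (intro mult_right_mono) auto
    then show "\<bar>A t * z t\<bar> \<le> e * A t" using A_pos[of t] by (simp add: abs_mult mult.commute)
  qed
qed

lemma oA_bdd_mult: "(\<And>t. \<bar>c t\<bar> \<le> 1) \<Longrightarrow> oA R \<Longrightarrow> oA (\<lambda>t. c t * R t)"
  by (rule oA_le[where Ta=0]) (auto simp: abs_mult intro: mult_left_le_one_le)

lemma oA_abs: "oA R \<Longrightarrow> oA (\<lambda>t. \<bar>R t\<bar>)"
  by (rule oA_le[where Ta=0]) auto


definition G2 where "G2 t = integral {0..t} (\<lambda>s. (p s)^2)"

lemma psq_cont: "continuous_on {0..} (\<lambda>s. (p s)^2)" by (intro continuous_intros p_cont)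

lemma G2_mono: "0 \<le> a \<Longrightarrow> a \<le> b \<Longrightarrow> G2 a \<le> G2 b"
proof -
  assume ab: "0 \<le> a" "a \<le> b"
  have "G2 b = G2 a + integral {a..b} (\<lambda>s. (p s)^2)" unfolding G2_def by (rule int_split[OF psq_cont ab])
  moreover have "0 \<le> integral {a..b} (\<lambda>s. (p s)^2)" using ab by (intro integral_nonneg cont_int psq_cont) auto
  ultimately show ?thesis by simp
qed

lemma G2_bound: "t \<ge> 0 \<Longrightarrow> G2 t \<le> (LINT s:{0..}|lborel. (p s)^2)"
proof -
  assume t: "t \<ge> 0"
  have "G2 t = (LINT s:{0..t}|lborel. (p s)^2)" unfolding G2_def by (rule cont_LINT[OF psq_cont, symmetric]) simp
  also have "\<dots> \<le> (LINT s:{0..}|lborel. (p s)^2)"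
    unfolding set_lebesgue_integral_def
  proof (rule integral_mono')
    show "integrable lborel (\<lambda>s. indicator {0..} s *\<^sub>R (p s)\<^sup>2)" using p_sq_int unfolding set_integrable_def .
    fix s :: real
    show "indicator {0..t} s *\<^sub>R (p s)\<^sup>2 \<le> indicator {0..} s *\<^sub>R (p s)\<^sup>2" by (auto simp: indicator_def)
    show "0 \<le> indicator {0..} s *\<^sub>R (p s)\<^sup>2" by (auto simp: indicator_def)
  qed
  finally show ?thesis .
qed

lemma q_tail: "e > 0 \<Longrightarrow> \<exists>Ta\<ge>0. \<forall>t\<ge>Ta. integral {Ta..t} (\<lambda>s. \<bar>q s\<bar>) \<le> e"
proof -
  assume e: "e > 0"
  obtain T1 where T1: "T1 \<ge> 0" "\<forall>t\<ge>T1. G2 t - G2 T1 \<le> e"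
    using mono_tail[of G2 "LINT s:{0..}|lborel. (p s)^2" e] G2_mono G2_bound e by auto
  obtain T2 where T2: "T2 \<ge> 0" "\<forall>t\<ge>T2. (- p t) - (- p T2) \<le> e"
    using mono_tail[of "\<lambda>t. - p t" 0 e] p_dec p_pos e by (force intro: less_imp_le)
  define Ta where "Ta = max T1 T2"
  have Ta: "Ta \<ge> 0" "Ta \<ge> T1" "Ta \<ge> T2" using T1 T2 by (auto simp: Ta_def)
  have "integral {Ta..t} (\<lambda>s. \<bar>q s\<bar>) \<le> e" if t: "t \<ge> Ta" for t
  proof -
    have "integral {Ta..t} (\<lambda>s. \<bar>q s\<bar>) \<le> integral {Ta..t} (\<lambda>s. (1/4) * (p s)^2 + (1/2) * (- p' s))"
    proof (rule integral_le)
      show "(\<lambda>s. \<bar>q s\<bar>) integrable_on {Ta..t}" using Ta by (intro cont_int continuous_intros q_cont) auto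
      show "(\<lambda>s. (1/4) * (p s)^2 + (1/2) * (- p' s)) integrable_on {Ta..t}" using Ta
        by (intro cont_int continuous_intros p_cont p'_cont) auto
      fix s assume "s \<in> {Ta..t}"
      then have s: "s \<ge> 0" using Ta by auto
      show "\<bar>q s\<bar> \<le> (1/4) * (p s)^2 + (1/2) * (- p' s)" using p'_neg[OF s] unfolding q_def by (simp add: abs_le_iff)
    qed
    also have "\<dots> = (1/4) * integral {Ta..t} (\<lambda>s. (p s)^2) + (1/2) * integral {Ta..t} (\<lambda>s. - p' s)"
    proof -
      have i1: "(\<lambda>s. (1/4) * (p s)^2) integrable_on {Ta..t}" using Ta by (intro cont_int continuous_intros p_cont) auto
      have i2: "(\<lambda>s. (1/2) * (- p' s)) integrable_on {Ta..t}" using Ta by (intro cont_int continuous_intros p'_cont) auto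
      show ?thesis by (simp only: Henstock_Kurzweil_Integration.integral_add[OF i1 i2] integral_mult_right)
    qed
    also have "integral {Ta..t} (\<lambda>s. (p s)^2) = G2 t - G2 Ta"
      unfolding G2_def using int_split[OF psq_cont Ta(1) t] by simp
    also have "integral {Ta..t} (\<lambda>s. - p' s) = p Ta - p t"
      using integral_unique[OF p'_int[OF Ta(1) t]] by simp
    also have "G2 t - G2 Ta \<le> e"
    proof -
      have "G2 t - G2 T1 \<le> e" using T1 Ta t by auto
      moreover have "G2 T1 \<le> G2 Ta" using G2_mono[of T1 Ta] T1 Ta by auto
      ultimately show ?thesis by linarith
    qed
    also have "p Ta - p t \<le> e"
    proof -
      have "(- p t) - (- p T2) \<le> e" using T2 Ta t by auto
      moreover have "p Ta \<le> p T2" using p_dec[of T2 Ta] T2 Ta by auto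
      ultimately show ?thesis by linarith
    qed
    finally show ?thesis using e by (simp add: algebra_simps)
  qed
  then show ?thesis using Ta by blast
qed

end


context setting
begin

lemma gC_b: "\<bar>gC s\<bar> \<le> 1" by simp
lemma gS_b: "\<bar>gS s\<bar> \<le> 1" by simp
lemma gCd_b: "\<bar>gCd s\<bar> \<le> \<omega>" using \<omega>_pos by (simp add: abs_mult)
lemma gSd_b: "\<bar>gSd s\<bar> \<le> \<omega>" using \<omega>_pos by (simp add: abs_mult)

lemma gq_bound: "(\<And>s. \<bar>g s\<bar> \<le> 1) \<Longrightarrow> s \<ge> 0 \<Longrightarrow> \<bar>g s * q s\<bar> \<le> Cq * (p s - p' s)"
proof -
  assume g: "\<And>s. \<bar>g s\<bar> \<le> 1" and s: "s \<ge> 0"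
  have "\<bar>g s * q s\<bar> \<le> 1 * \<bar>q s\<bar>" unfolding abs_mult by (rule mult_right_mono[OF g]) simp
  then show ?thesis using q_bound[OF s] by simp
qed

lemma Kc_cont: "continuous_on {0..} Kc"
  unfolding Kc_def[abs_def] by (intro int_cont continuous_intros A_cont Y2_cont)
lemma Ks_cont: "continuous_on {0..} Ks"
  unfolding Ks_def[abs_def] by (intro int_cont continuous_intros A_cont Y2_cont)
lemma Rc_cont: "continuous_on {0..} Rc"
  unfolding Rc_def[abs_def] by (intro int_cont continuous_intros A_cont Y2_cont rg_cont)
lemma Rs_cont: "continuous_on {0..} Rs"
  unfolding Rs_def[abs_def] by (intro int_cont continuous_intros A_cont Y2_cont rg_cont)

lemma oRc: "(Y2 \<longlongrightarrow> 0) at_top \<Longrightarrow> oA Rc"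
  unfolding Rc_def[abs_def]
  by (rule oA_weighted[OF Y2_cont _ rg_cont rg_bound[OF gC_b gCd_b]]) (auto intro!: continuous_intros)
lemma oRs: "(Y2 \<longlongrightarrow> 0) at_top \<Longrightarrow> oA Rs"
  unfolding Rs_def[abs_def]
  by (rule oA_weighted[OF Y2_cont _ rg_cont rg_bound[OF gS_b gSd_b]]) (auto intro!: continuous_intros)
lemma oQc: "(x \<longlongrightarrow> 0) at_top \<Longrightarrow> oA Qc"
  unfolding Qc_def[abs_def]
  by (rule oA_weighted[OF x_cont _ _ gq_bound]) (auto intro!: continuous_intros q_cont)
lemma oQs: "(x \<longlongrightarrow> 0) at_top \<Longrightarrow> oA Qs"
  unfolding Qs_def[abs_def]
  by (rule oA_weighted[OF x_cont _ _ gq_bound]) (auto intro!: continuous_intros q_cont)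

lemma trig_shift: "sin (\<omega> * (t + pi / (2 * \<omega>))) = cos (\<omega> * t)" "cos (\<omega> * (t + pi / (2 * \<omega>))) = - sin (\<omega> * t)"
proof -
  have e: "\<omega> * (t + pi / (2 * \<omega>)) = \<omega> * t + pi / 2" using \<omega>_pos by (simp add: field_simps)
  show "sin (\<omega> * (t + pi / (2 * \<omega>))) = cos (\<omega> * t)" unfolding e by (simp add: sin_add)
  show "cos (\<omega> * (t + pi / (2 * \<omega>))) = - sin (\<omega> * t)" unfolding e by (simp add: cos_add)
qed

lemma rot_alg: "sn * (sn * P - c * Q) + c * (c * P + sn * Q) = P * (sn\<^sup>2 + c\<^sup>2)"
  "sn * (c * P + sn * Q) - c * (sn * P - c * Q) = Q * (sn\<^sup>2 + c\<^sup>2)" for sn c P Q :: real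
  by (simp_all add: algebra_simps power2_eq_square)

lemma dir1:
  assumes xl: "(x \<longlongrightarrow> 0) at_top"
  shows "(Y2 \<longlongrightarrow> 0) at_top" "oA Kc" "oA Ks"
proof -
  show Yl: "(Y2 \<longlongrightarrow> 0) at_top" by (rule Y2_lim[OF xl])
  define Pc where "Pc t = \<alpha> * Kc t + \<beta> * Ks t" for t
  define Ps where "Ps t = \<alpha> * Ks t + (- \<beta>) * Kc t" for t
  define L where "L t = sin (\<omega> * t) * Pc t - cos (\<omega> * t) * Ps t" for t
  have xy: "((\<lambda>t. x t - Y2 t) \<longlongrightarrow> 0) at_top" using tendsto_diff[OF xl Yl] by simp
  have oL': "oA (\<lambda>t. \<omega> * (A t * (x t - Y2 t)) - sin (\<omega> * t) * (Rc t + Qc t) + cos (\<omega> * t) * (Rs t + Qs t))"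
    by (intro oA_add oA_diff oA_cmult oA_of_tendsto0[OF xy] oA_bdd_mult oRc oRs oQc oQs Yl xl) auto
  have oL: "oA L"
  proof (rule oA_eq[OF oL', where Ta=0])
    fix t :: real assume t: "t \<ge> 0"
    have "sin (\<omega> * t) * Wg gC gCd t - cos (\<omega> * t) * Wg gS gSd t = \<omega> * A t * (x t - Y2 t)" by (rule osc_identity)
    then show "L t = \<omega> * (A t * (x t - Y2 t)) - sin (\<omega> * t) * (Rc t + Qc t) + cos (\<omega> * t) * (Rs t + Qs t)"
      unfolding Wc_decomp[OF t] Ws_decomp[OF t] L_def Pc_def Ps_def by (simp add: algebra_simps)
  qed
  define \<tau> where "\<tau> = pi / (2 * \<omega>)"
  have tau: "\<tau> \<ge> 0" using \<omega>_pos by (simp add: \<tau>_def)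
  have oLs: "oA (\<lambda>t. L (t + \<tau>))" by (rule oA_shift[OF oL tau])
  have oDc: "oA (\<lambda>t. Kc (t + \<tau>) - Kc t)"
    unfolding Kc_def by (rule oA_slow[OF Y2_cont Yl _ _ tau]) (auto intro!: continuous_intros)
  have oDs: "oA (\<lambda>t. Ks (t + \<tau>) - Ks t)"
    unfolding Ks_def by (rule oA_slow[OF Y2_cont Yl _ _ tau]) (auto intro!: continuous_intros)
  define L2 where "L2 t = cos (\<omega> * t) * Pc t + sin (\<omega> * t) * Ps t" for t
  have oL2': "oA (\<lambda>t. L (t + \<tau>) - cos (\<omega> * t) * (\<alpha> * (Kc (t + \<tau>) - Kc t) + \<beta> * (Ks (t + \<tau>) - Ks t))
       - sin (\<omega> * t) * (\<alpha> * (Ks (t + \<tau>) - Ks t) + (- \<beta>) * (Kc (t + \<tau>) - Kc t)))"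
    by (intro oA_add oA_diff oA_cmult oA_bdd_mult oLs oDc oDs) auto
  have oL2: "oA L2"
  proof (rule oA_eq[OF oL2', where Ta=0])
    fix t :: real
    show "L2 t = L (t + \<tau>) - cos (\<omega> * t) * (\<alpha> * (Kc (t + \<tau>) - Kc t) + \<beta> * (Ks (t + \<tau>) - Ks t))
       - sin (\<omega> * t) * (\<alpha> * (Ks (t + \<tau>) - Ks t) + (- \<beta>) * (Kc (t + \<tau>) - Kc t))"
      unfolding L2_def L_def Pc_def Ps_def \<tau>_def trig_shift by (simp add: algebra_simps)
  qed
  have oPc: "oA Pc"
  proof (rule oA_eq[where Ta=0])
    show "oA (\<lambda>t. sin (\<omega> * t) * L t + cos (\<omega> * t) * L2 t)" by (intro oA_add oA_bdd_mult oL oL2) auto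
    fix t :: real
    have "sin (\<omega> * t) * L t + cos (\<omega> * t) * L2 t = Pc t * ((sin (\<omega> * t))\<^sup>2 + (cos (\<omega> * t))\<^sup>2)"
      unfolding L_def L2_def by (rule rot_alg)
    then show "Pc t = sin (\<omega> * t) * L t + cos (\<omega> * t) * L2 t" by (simp only: sin_cos_squared_add mult_1_right)
  qed
  have oPs: "oA Ps"
  proof (rule oA_eq[where Ta=0])
    show "oA (\<lambda>t. sin (\<omega> * t) * L2 t - cos (\<omega> * t) * L t)" by (intro oA_diff oA_bdd_mult oL oL2) auto
    fix t :: real
    have "sin (\<omega> * t) * L2 t - cos (\<omega> * t) * L t = Ps t * ((sin (\<omega> * t))\<^sup>2 + (cos (\<omega> * t))\<^sup>2)"
      unfolding L_def L2_def by (rule rot_alg)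
    then show "Ps t = sin (\<omega> * t) * L2 t - cos (\<omega> * t) * L t" by (simp only: sin_cos_squared_add mult_1_right)
  qed
  define D where "D = \<alpha>^2 + \<beta>^2"
  have D: "D \<noteq> 0" unfolding D_def using \<omega>_pos by (simp add: add_nonneg_pos)
  show "oA Kc"
  proof (rule oA_eq[where Ta=0])
    show "oA (\<lambda>t. (1 / D) * (\<alpha> * Pc t - \<beta> * Ps t))" by (intro oA_cmult oA_diff oPc oPs)
    fix t :: real
    have "\<alpha> * Pc t - \<beta> * Ps t = D * Kc t" unfolding Pc_def Ps_def D_def by (simp add: algebra_simps power2_eq_square)
    then show "Kc t = (1 / D) * (\<alpha> * Pc t - \<beta> * Ps t)" using D by simp
  qed
  show "oA Ks"
  proof (rule oA_eq[where Ta=0])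
    show "oA (\<lambda>t. (1 / D) * (\<beta> * Pc t + \<alpha> * Ps t))" by (intro oA_cmult oA_add oPc oPs)
    fix t :: real
    have "\<beta> * Pc t + \<alpha> * Ps t = D * Ks t" unfolding Pc_def Ps_def D_def by (simp add: algebra_simps power2_eq_square)
    then show "Ks t = (1 / D) * (\<beta> * Pc t + \<alpha> * Ps t)" using D by simp
  qed
qed

end


context setting
begin

lemma Wg_cont: "continuous_on {0..} g \<Longrightarrow> continuous_on {0..} gd \<Longrightarrow> continuous_on {0..} (Wg g gd)"
  unfolding Wg_def[abs_def] by (intro continuous_intros A_cont N_cont J_cont p_cont x_cont Y2_cont) auto

lemma Q_bound:
  assumes g1: "\<And>s. \<bar>g s\<bar> \<le> 1" and gc: "continuous_on {0..} g" and t: "0 \<le> t"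
    and Nc: "continuous_on {0..} Nf"
    and key: "\<And>s. s \<ge> 0 \<Longrightarrow> A s * \<bar>x s\<bar> \<le> Nf s / \<omega> + A s * \<bar>Y2 s\<bar>"
  shows "\<bar>integral {0..t} (\<lambda>s. A s * (g s * q s) * x s)\<bar> \<le>
     integral {0..t} (\<lambda>s. (\<bar>q s\<bar> / \<omega>) * Nf s) + integral {0..t} (\<lambda>s. A s * \<bar>q s\<bar> * \<bar>Y2 s\<bar>)"
proof -
  have i1: "(\<lambda>s. (\<bar>q s\<bar> / \<omega>) * Nf s) integrable_on {0..t}" using t \<omega>_pos by (intro cont_int continuous_intros q_cont Nc) auto
  have i2: "(\<lambda>s. A s * \<bar>q s\<bar> * \<bar>Y2 s\<bar>) integrable_on {0..t}" using t by (intro cont_int continuous_intros q_cont A_cont Y2_cont) auto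
  have "norm (integral {0..t} (\<lambda>s. A s * (g s * q s) * x s)) \<le> integral {0..t} (\<lambda>s. (\<bar>q s\<bar> / \<omega>) * Nf s + A s * \<bar>q s\<bar> * \<bar>Y2 s\<bar>)"
  proof (rule integral_norm_bound_integral)
    show "(\<lambda>s. A s * (g s * q s) * x s) integrable_on {0..t}" using t
      by (intro cont_int continuous_intros q_cont A_cont x_cont gc) auto
    show "(\<lambda>s. (\<bar>q s\<bar> / \<omega>) * Nf s + A s * \<bar>q s\<bar> * \<bar>Y2 s\<bar>) integrable_on {0..t}"
      using i1 i2 by (rule integrable_add)
    fix s assume "s \<in> {0..t}"
    then have s: "s \<ge> 0" by simp
    have "norm (A s * (g s * q s) * x s) = \<bar>g s\<bar> * (\<bar>q s\<bar> * (A s * \<bar>x s\<bar>))" using A_pos[of s] by (simp add: abs_mult)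
    also have "\<dots> \<le> 1 * (\<bar>q s\<bar> * (A s * \<bar>x s\<bar>))" using g1[of s] A_pos[of s] by (intro mult_right_mono) auto
    also have "\<dots> \<le> \<bar>q s\<bar> * (Nf s / \<omega> + A s * \<bar>Y2 s\<bar>)" using key[OF s] by (simp add: mult_left_mono)
    finally show "norm (A s * (g s * q s) * x s) \<le> (\<bar>q s\<bar> / \<omega>) * Nf s + A s * \<bar>q s\<bar> * \<bar>Y2 s\<bar>"
      by (simp add: algebra_simps)
  qed
  then show ?thesis using Henstock_Kurzweil_Integration.integral_add[OF i1 i2] by simp
qed

lemma dir2:
  assumes Yl: "(Y2 \<longlongrightarrow> 0) at_top" and oKc: "oA Kc" and oKs: "oA Ks"
  shows "(x \<longlongrightarrow> 0) at_top"
proof -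
  define Ec where "Ec t = \<alpha> * Kc t + \<beta> * Ks t + Rc t" for t
  define Es where "Es t = \<alpha> * Ks t + (- \<beta>) * Kc t + Rs t" for t
  have oEc: "oA Ec" unfolding Ec_def[abs_def] by (intro oA_add oA_cmult oKc oKs oRc Yl)
  have oEs: "oA Es" unfolding Es_def[abs_def] by (intro oA_add oA_cmult oKc oKs oRs Yl)
  have Ec_cont: "continuous_on {0..} Ec" unfolding Ec_def[abs_def] by (intro continuous_intros Kc_cont Ks_cont Rc_cont)
  have Es_cont: "continuous_on {0..} Es" unfolding Es_def[abs_def] by (intro continuous_intros Kc_cont Ks_cont Rs_cont)
  define Nf where "Nf t = \<bar>Wg gC gCd t\<bar> + \<bar>Wg gS gSd t\<bar>" for t
  have Nc: "continuous_on {0..} Nf" unfolding Nf_def[abs_def] by (intro continuous_intros Wg_cont)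
  have key0: "\<omega> * (A s * \<bar>x s - Y2 s\<bar>) \<le> Nf s" for s
  proof -
    have "\<omega> * (A s * \<bar>x s - Y2 s\<bar>) = \<bar>\<omega> * A s * (x s - Y2 s)\<bar>" using \<omega>_pos A_pos[of s] by (simp add: abs_mult)
    also have "\<dots> = \<bar>sin (\<omega> * s) * Wg gC gCd s - cos (\<omega> * s) * Wg gS gSd s\<bar>" by (simp add: osc_identity)
    also have "\<dots> \<le> \<bar>sin (\<omega> * s)\<bar> * \<bar>Wg gC gCd s\<bar> + \<bar>cos (\<omega> * s)\<bar> * \<bar>Wg gS gSd s\<bar>"
      by (simp add: abs_mult[symmetric] abs_triangle_ineq4)
    also have "\<dots> \<le> 1 * \<bar>Wg gC gCd s\<bar> + 1 * \<bar>Wg gS gSd s\<bar>" by (intro add_mono mult_right_mono) auto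
    finally show ?thesis unfolding Nf_def by simp
  qed
  have key: "A s * \<bar>x s\<bar> \<le> Nf s / \<omega> + A s * \<bar>Y2 s\<bar>" if "s \<ge> 0" for s
  proof -
    have "A s * \<bar>x s - Y2 s\<bar> \<le> Nf s / \<omega>" using key0[of s] \<omega>_pos by (simp add: field_simps mult.commute)
    moreover have "A s * \<bar>x s\<bar> \<le> A s * \<bar>x s - Y2 s\<bar> + A s * \<bar>Y2 s\<bar>"
    proof -
      have "\<bar>x s\<bar> \<le> \<bar>x s - Y2 s\<bar> + \<bar>Y2 s\<bar>" using abs_triangle_ineq[of "x s - Y2 s" "Y2 s"] by simp
      then have "A s * \<bar>x s\<bar> \<le> A s * (\<bar>x s - Y2 s\<bar> + \<bar>Y2 s\<bar>)" using A_pos[of s] by (intro mult_left_mono) auto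
      then show ?thesis by (simp add: distrib_left)
    qed
    ultimately show ?thesis by linarith
  qed
  define I1 where "I1 t = integral {0..t} (\<lambda>s. (\<bar>q s\<bar> / \<omega>) * Nf s)" for t
  define I2 where "I2 t = integral {0..t} (\<lambda>s. A s * \<bar>q s\<bar> * \<bar>Y2 s\<bar>)" for t
  define B where "B t = \<bar>Ec t\<bar> + \<bar>Es t\<bar> + 2 * I2 t" for t
  define k where "k s = 2 * \<bar>q s\<bar> / \<omega>" for s
  have oI2: "oA I2" unfolding I2_def[abs_def]
    by (rule oA_weighted[where k="\<lambda>s. \<bar>q s\<bar>" and z="\<lambda>s. \<bar>Y2 s\<bar>" and C=Cq])
       (auto intro!: continuous_intros Y2_cont q_cont tendsto_rabs_zero Yl q_bound)
  have oB: "oA B" unfolding B_def[abs_def] by (intro oA_add oA_abs oEc oEs oA_cmult oI2)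
  have Bc: "continuous_on {0..} B" unfolding B_def[abs_def] I2_def
    by (intro continuous_intros Ec_cont Es_cont int_cont A_cont q_cont Y2_cont)
  obtain Ta where Ta: "Ta \<ge> 0" "\<forall>t\<ge>Ta. integral {Ta..t} (\<lambda>s. \<bar>q s\<bar>) \<le> \<omega> / 4"
    using q_tail[of "\<omega>/4"] \<omega>_pos by auto
  have ktail: "integral {Ta..t} k \<le> 1/2" if "t \<ge> Ta" for t
  proof -
    have kk: "k = (\<lambda>s. (2 / \<omega>) * \<bar>q s\<bar>)" unfolding k_def by (simp add: fun_eq_iff)
    have "integral {Ta..t} k = (2 / \<omega>) * integral {Ta..t} (\<lambda>s. \<bar>q s\<bar>)"
      unfolding kk by (rule integral_mult_right)
    also have "\<dots> \<le> (2 / \<omega>) * (\<omega> / 4)" using Ta that \<omega>_pos by (intro mult_left_mono) auto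
    also have "\<dots> = 1/2" using \<omega>_pos by simp
    finally show ?thesis .
  qed
  have ineq: "Nf t \<le> B t + integral {0..t} (\<lambda>s. k s * Nf s)" if t: "t \<ge> 0" for t
  proof -
    have Qc_b: "\<bar>Qc t\<bar> \<le> I1 t + I2 t" unfolding Qc_def I1_def I2_def by (rule Q_bound[OF gC_b _ t Nc key]) (intro continuous_intros)
    have Qs_b: "\<bar>Qs t\<bar> \<le> I1 t + I2 t" unfolding Qs_def I1_def I2_def by (rule Q_bound[OF gS_b _ t Nc key]) (intro continuous_intros)
    have "Wg gC gCd t = Ec t + Qc t" unfolding Wc_decomp[OF t] Ec_def by simp
    moreover have "Wg gS gSd t = Es t + Qs t" unfolding Ws_decomp[OF t] Es_def by simp
    ultimately have "Nf t \<le> \<bar>Ec t\<bar> + \<bar>Es t\<bar> + 2 * I2 t + 2 * I1 t"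
      unfolding Nf_def using Qc_b Qs_b by linarith
    moreover have "integral {0..t} (\<lambda>s. k s * Nf s) = 2 * I1 t"
    proof -
      have "(\<lambda>s. k s * Nf s) = (\<lambda>s. 2 * ((\<bar>q s\<bar> / \<omega>) * Nf s))" unfolding k_def by (simp add: fun_eq_iff)
      then show ?thesis unfolding I1_def by (simp only: integral_mult_right)
    qed
    ultimately show ?thesis unfolding B_def by simp
  qed
  have oN: "oA Nf"
  proof (rule gronwall_oA[OF Nc _ Bc oB _ _ Ta(1) ktail ineq])
    show "\<And>t. 0 \<le> t \<Longrightarrow> 0 \<le> Nf t" unfolding Nf_def by simp
    show "continuous_on {0..} k" unfolding k_def[abs_def] using \<omega>_pos by (intro continuous_intros q_cont) auto
    show "\<And>s. 0 \<le> s \<Longrightarrow> 0 \<le> k s" unfolding k_def using \<omega>_pos by simp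
  qed auto
  have "((\<lambda>t. x t - Y2 t) \<longlongrightarrow> 0) at_top"
  proof (rule tendstoI)
    fix e :: real assume e: "e > 0"
    obtain T where T: "T \<ge> 0" "\<forall>t\<ge>T. \<bar>Nf t\<bar> \<le> (e * \<omega> / 2) * A t" using oA_D[OF oN, of "e * \<omega> / 2"] e \<omega>_pos by auto
    have "dist (x t - Y2 t) 0 < e" if t: "t \<ge> T" for t
    proof -
      have "\<omega> * (A t * \<bar>x t - Y2 t\<bar>) \<le> (e * \<omega> / 2) * A t" using key0[of t] T t by auto
      then have "A t * \<bar>x t - Y2 t\<bar> \<le> A t * (e / 2)" using \<omega>_pos by (simp add: field_simps)
      then have "\<bar>x t - Y2 t\<bar> \<le> e / 2" using A_pos[of t] by simp
      then show ?thesis using e by (simp add: dist_real_def)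
    qed
    then show "eventually (\<lambda>t. dist (x t - Y2 t) 0 < e) at_top" unfolding eventually_at_top_linorder by blast
  qed
  then have "((\<lambda>t. (x t - Y2 t) + Y2 t) \<longlongrightarrow> 0 + 0) at_top" by (intro tendsto_add Yl)
  then show ?thesis by simp
qed

end


context setting
begin

lemma LC_eq:
  assumes t: "0 \<le> t" and g: "continuous_on {0..} g"
  shows "set_lebesgue_integral lborel {0..t} (\<lambda>s. g s * Afun p s * y2fun \<omega> f s) = integral {0..t} (\<lambda>s. A s * g s * Y2 s)"
proof -
  have "set_lebesgue_integral lborel {0..t} (\<lambda>s. g s * Afun p s * y2fun \<omega> f s) = (LINT s:{0..t}|lborel. A s * g s * Y2 s)"
    by (rule set_lebesgue_integral_cong) (auto simp: y2_eq A_def)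
  also have "\<dots> = integral {0..t} (\<lambda>s. A s * g s * Y2 s)"
    by (rule cont_LINT) (auto intro!: continuous_intros A_cont g Y2_cont)
  finally show ?thesis .
qed

lemma final_equiv:
  "(x \<longlongrightarrow> 0) at_top \<longleftrightarrow>
          ((y2fun \<omega> f \<longlongrightarrow> 0) at_top
           \<and> (\<lambda>t. set_lebesgue_integral lborel {0..t}
                  (\<lambda>s. cos (\<omega> * s) * Afun p s * y2fun \<omega> f s)) \<in> o[at_top](Afun p)
           \<and> (\<lambda>t. set_lebesgue_integral lborel {0..t}
                  (\<lambda>s. sin (\<omega> * s) * Afun p s * y2fun \<omega> f s)) \<in> o[at_top](Afun p))"
proof -
  have Y: "(y2fun \<omega> f \<longlongrightarrow> 0) at_top \<longleftrightarrow> (Y2 \<longlongrightarrow> 0) at_top" by (rule tendsto_at_top_cong0) (simp add: y2_eq)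
  have C: "(\<lambda>t. set_lebesgue_integral lborel {0..t} (\<lambda>s. cos (\<omega> * s) * Afun p s * y2fun \<omega> f s)) \<in> o[at_top](Afun p)
      \<longleftrightarrow> oA Kc"
  proof -
    have e: "t \<ge> 0 \<Longrightarrow> set_lebesgue_integral lborel {0..t} (\<lambda>s. cos (\<omega> * s) * Afun p s * y2fun \<omega> f s) = Kc t" for t
      unfolding Kc_def by (rule LC_eq) (auto intro!: continuous_intros)
    define LC where "LC t = set_lebesgue_integral lborel {0..t} (\<lambda>s. cos (\<omega> * s) * Afun p s * y2fun \<omega> f s)" for t
    have "oA LC \<longleftrightarrow> oA Kc"
    proof
      assume a: "oA LC"
      show "oA Kc" by (rule oA_eq[OF a, where Ta=0]) (simp add: e LC_def)
    next
      assume a: "oA Kc"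
      show "oA LC" by (rule oA_eq[OF a, where Ta=0]) (simp add: e LC_def)
    qed
    then show ?thesis unfolding oA_iff_smallo A_def LC_def[abs_def] .
  qed
  have S: "(\<lambda>t. set_lebesgue_integral lborel {0..t} (\<lambda>s. sin (\<omega> * s) * Afun p s * y2fun \<omega> f s)) \<in> o[at_top](Afun p)
      \<longleftrightarrow> oA Ks"
  proof -
    have e: "t \<ge> 0 \<Longrightarrow> set_lebesgue_integral lborel {0..t} (\<lambda>s. sin (\<omega> * s) * Afun p s * y2fun \<omega> f s) = Ks t" for t
      unfolding Ks_def by (rule LC_eq) (auto intro!: continuous_intros)
    define LC where "LC t = set_lebesgue_integral lborel {0..t} (\<lambda>s. sin (\<omega> * s) * Afun p s * y2fun \<omega> f s)" for t
    have "oA LC \<longleftrightarrow> oA Ks"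
    proof
      assume a: "oA LC"
      show "oA Ks" by (rule oA_eq[OF a, where Ta=0]) (simp add: e LC_def)
    next
      assume a: "oA Ks"
      show "oA LC" by (rule oA_eq[OF a, where Ta=0]) (simp add: e LC_def)
    qed
    then show ?thesis unfolding oA_iff_smallo A_def LC_def[abs_def] .
  qed
  show ?thesis unfolding Y C S using dir1 dir2 by blast
qed

end

theorem mainTheorem16:
  fixes \<omega> :: real and p p' f x x' :: "real \<Rightarrow> real"
  assumes \<omega>_pos: "\<omega> > 0"
    and p_deriv: "\<And>t. t \<ge> 0 \<Longrightarrow> (p has_real_derivative p' t) (at t within {0..})"
    and p'_cont: "continuous_on {0..} p'"
    and p_pos: "\<And>t. t \<ge> 0 \<Longrightarrow> p t > 0"
    and p'_neg: "\<And>t. t \<ge> 0 \<Longrightarrow> p' t < 0"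
    and p_int_div: "filterlim (\<lambda>t. integral {0..t} p) at_top at_top"
    and p_sq_int: "set_integrable lborel {0..} (\<lambda>t. (p t)^2)"
    and f_loc: "\<And>t. t \<ge> 0 \<Longrightarrow> set_integrable lborel {0..t} f"
    and x_deriv: "\<And>t. t \<ge> 0 \<Longrightarrow> (x has_real_derivative x' t) (at t within {0..})"
    and x'_cont: "continuous_on {0..} x'"
    and x_ode: "\<And>t. t \<ge> 0 \<Longrightarrow>
        x' t = x' 0 + set_lebesgue_integral lborel {0..t}
                 (\<lambda>s. f s - p s * x' s - \<omega>^2 * x s)"
    and x0: "x 0 = 0" and x'0: "x' 0 = 0"
  shows "(x \<longlongrightarrow> 0) at_top \<longleftrightarrow>
          ((y2fun \<omega> f \<longlongrightarrow> 0) at_top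
           \<and> (\<lambda>t. set_lebesgue_integral lborel {0..t}
                  (\<lambda>s. cos (\<omega> * s) * Afun p s * y2fun \<omega> f s)) \<in> o[at_top](Afun p)
           \<and> (\<lambda>t. set_lebesgue_integral lborel {0..t}
                  (\<lambda>s. sin (\<omega> * s) * Afun p s * y2fun \<omega> f s)) \<in> o[at_top](Afun p))"
proof -
  interpret setting \<omega> p p' f x x'
    by (unfold_locales) (fact assms)+
  show ?thesis by (rule final_equiv)
qed


end
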